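(* Let $\mathcal S$ be a convex Sawtooth model with $n$ upper particles, let $1\le s\le r$ and $t\in[0,1]$. Then $x\mapsto F_{X_s\mid X_r=x}(t)$ is nonincreasing (for $r\le n+1$) and $y\mapsto F_{X_s\mid Y_r=y}(t)$ is nonincreasing (for $r\le n$). Moreover, for $r\le n$ and all $x,y\in[0,1]$, $$F^{\mathcal S_{\to X_r}}_{X_s}(t)\le F_{X_s\mid Y_r=y}(t)\qquad\text{and}\qquad F^{\mathcal S_{\to Y_r}}_{X_s}(t)\ge F_{X_s\mid X_{r+1}=x}(t).$$
   Context: A (type $--$) Sawtooth model with $n\ge1$ upper particles is specified by functions $f_1,g_1,\dots,f_n,g_n:[0,1]\to[0,\infty)$, each nondecreasing, $C^1$ and not identically zero. It is the probability space $[0,1]^{n+1}\times[0,1]^n$ with probability density at $(x_1,\dots,x_{n+1},y_1,\dots,y_n)$ equal to $\frac{1}{\mathcal V}\prod_{i=1}^n\mathbf 1_{\{x_i\le y_i\}}\mathbf 1_{\{x_{i+1}\le y_i\}}f_i(y_i-x_i)\,g_i(y_i-x_{i+1})$, $\mathcal V$ being the normalizing constant. The coordinates $X_1,\dots,X_{n+1}$ are the lower particles and $Y_1,\dots,Y_n$ the upper particles (ordered $X_1,Y_1,X_2,\dots,Y_n,X_{n+1}$). The model is convex if every $f_i,g_i$ is positive on $(0,1]$ and log-concave, i.e. $f_i'/f_i$ and $g_i'/g_i$ are nonincreasing. Conditional cumulative distribution functions $F_{U\mid V=v}(t)=\mathbb P(U\le t\mid V=v)$ are computed from the joint density. For a particle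 $P$, $\mathcal S_{\to P}$ is the model obtained by keeping only the particles from $X_1$ up to $P$ and the interaction factors among them (if $P=Y_r$ the last factor is $f_r(y_r-x_r)$); $F^{\mathcal S_{\to P}}_U$ is the cumulative distribution function of particle $U$ in $\mathcal S_{\to P}$. *)

theory Defs
  imports "HOL-Analysis.Analysis"
begin

text \<open>Particles of a Sawtooth model: lower particles XP i (i = 1..n+1) and upper particles
  YP i (i = 1..n). A configuration is a map from particles to positions.\<close>
datatype particle = XP nat | YP nat

text \<open>The full model with n upper particles is \<open>sw_parts n False\<close>;
  the model S_(->X_r) is \<open>sw_parts (r-1) False\<close> and S_(->Y_r) is \<open>sw_parts (r-1) True\<close>.\<close>
definition sw_parts :: "nat \<Rightarrow> bool \<Rightarrow> particle set" where
  "sw_parts m h = XP ` {1..m+1} \<union> YP ` {1..m} \<union> (if h then {YP (m+1)} else {})"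

text \<open>Unnormalised density (w.r.t. Lebesgue measure on the coordinates in \<open>sw_parts m h\<close>).\<close>
definition sw_dens ::
  "(nat \<Rightarrow> real \<Rightarrow> real) \<Rightarrow> (nat \<Rightarrow> real \<Rightarrow> real) \<Rightarrow> nat \<Rightarrow> bool \<Rightarrow> (particle \<Rightarrow> real) \<Rightarrow> real" where
  "sw_dens f g m h z =
     (\<Prod>p\<in>sw_parts m h. indicator {0..1} (z p)) *
     (\<Prod>i\<in>{1..m}. (if z (XP i) \<le> z (YP i) \<and> z (XP (i+1)) \<le> z (YP i)
                      then f i (z (YP i) - z (XP i)) * g i (z (YP i) - z (XP (i+1))) else 0)) *
     (if h then (if z (XP (m+1)) \<le> z (YP (m+1)) then f (m+1) (z (YP (m+1)) - z (XP (m+1))) else 0)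
      else 1)"

definition sw_mass ::
  "(nat \<Rightarrow> real \<Rightarrow> real) \<Rightarrow> (nat \<Rightarrow> real \<Rightarrow> real) \<Rightarrow> nat \<Rightarrow> bool \<Rightarrow> real" where
  "sw_mass f g m h = (\<integral>z. sw_dens f g m h z \<partial>(PiM (sw_parts m h) (\<lambda>_. lborel)))"

definition sw_cdf ::
  "(nat \<Rightarrow> real \<Rightarrow> real) \<Rightarrow> (nat \<Rightarrow> real \<Rightarrow> real) \<Rightarrow> nat \<Rightarrow> bool \<Rightarrow> particle \<Rightarrow> real \<Rightarrow> real" where
  "sw_cdf f g m h U t =
     (\<integral>z. indicator {..t} (z U) * sw_dens f g m h z \<partial>(PiM (sw_parts m h) (\<lambda>_. lborel)))
     / sw_mass f g m h"

definition sw_marg ::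
  "(nat \<Rightarrow> real \<Rightarrow> real) \<Rightarrow> (nat \<Rightarrow> real \<Rightarrow> real) \<Rightarrow> nat \<Rightarrow> bool \<Rightarrow> particle \<Rightarrow> real \<Rightarrow> real" where
  "sw_marg f g m h V v =
     (\<integral>z. sw_dens f g m h (z(V := v)) \<partial>(PiM (sw_parts m h - {V}) (\<lambda>_. lborel)))"

definition sw_cond_cdf ::
  "(nat \<Rightarrow> real \<Rightarrow> real) \<Rightarrow> (nat \<Rightarrow> real \<Rightarrow> real) \<Rightarrow> nat \<Rightarrow> bool \<Rightarrow> particle \<Rightarrow> particle \<Rightarrow> real \<Rightarrow> real \<Rightarrow> real" where
  "sw_cond_cdf f g m h U V v t =
     (\<integral>z. indicator {..t} ((z(V := v)) U) * sw_dens f g m h (z(V := v))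
        \<partial>(PiM (sw_parts m h - {V}) (\<lambda>_. lborel)))
     / sw_marg f g m h V v"

definition sw_admissible :: "(real \<Rightarrow> real) \<Rightarrow> bool" where
  "sw_admissible \<phi> \<longleftrightarrow>
     (\<forall>x\<in>{0..1}. \<phi> x \<ge> 0) \<and> mono_on {0..1} \<phi> \<and> (\<exists>x\<in>{0..1}. \<phi> x \<noteq> 0) \<and>
     (\<exists>\<phi>'. (\<forall>x\<in>{0..1}. (\<phi> has_real_derivative \<phi>' x) (at x within {0..1})) \<and> continuous_on {0..1} \<phi>')"

text \<open>Convexity condition: positive on (0,1] and log-concave (\<phi>'/\<phi> nonincreasing on (0,1]).\<close>
definition sw_logconcave :: "(real \<Rightarrow> real) \<Rightarrow> bool" where
  "sw_logconcave \<phi> \<longleftrightarrow>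
     (\<forall>x\<in>{0<..1}. \<phi> x > 0) \<and>
     (\<exists>\<phi>'. (\<forall>x\<in>{0..1}. (\<phi> has_real_derivative \<phi>' x) (at x within {0..1})) \<and>
           antimono_on {0<..1} (\<lambda>x. \<phi>' x / \<phi> x))"

definition convex_sawtooth :: "(nat \<Rightarrow> real \<Rightarrow> real) \<Rightarrow> (nat \<Rightarrow> real \<Rightarrow> real) \<Rightarrow> nat \<Rightarrow> bool" where
  "convex_sawtooth f g n \<longleftrightarrow> n \<ge> 1 \<and>
     (\<forall>i\<in>{1..n}. sw_admissible (f i) \<and> sw_admissible (g i) \<and>
                  sw_logconcave (f i) \<and> sw_logconcave (g i))"

end

theory Submission
  imports Defs
begin

definition pt :: "nat \<Rightarrow> particle" where
  "pt j = (if even j then XP (j div 2 + 1) else YP (j div 2 + 1))"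

lemma pt_eq_iff[simp]: "pt i = pt j \<longleftrightarrow> i = j"
  unfolding pt_def by (auto split: if_splits) presburger+

lemma inj_pt: "inj pt" by (auto simp: inj_def)

definition chd :: "(nat \<Rightarrow> real \<Rightarrow> real) \<Rightarrow> (nat \<Rightarrow> real \<Rightarrow> real \<Rightarrow> real) \<Rightarrow> nat \<Rightarrow> (particle \<Rightarrow> real) \<Rightarrow> real" where
  "chd W K N z = (\<Prod>j\<in>{0..N}. W j (z (pt j))) * (\<Prod>j<N. K j (z (pt j)) (z (pt (Suc j))))"

definition Lft :: "(nat \<Rightarrow> real \<Rightarrow> real) \<Rightarrow> (nat \<Rightarrow> real \<Rightarrow> real \<Rightarrow> real) \<Rightarrow> nat \<Rightarrow> (particle \<Rightarrow> real) \<Rightarrow> real" where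
  "Lft W K c z = (\<Prod>j<c. W j (z (pt j))) * (\<Prod>j<c. K j (z (pt j)) (z (pt (Suc j))))"

fun fwp :: "(nat \<Rightarrow> real \<Rightarrow> real) \<Rightarrow> (nat \<Rightarrow> real \<Rightarrow> real \<Rightarrow> real) \<Rightarrow> nat \<Rightarrow> real \<Rightarrow> ennreal" where
  "fwp W K 0 v = 1"
| "fwp W K (Suc c) v = (\<integral>\<^sup>+u. ennreal (K c u v) * (ennreal (W c u) * fwp W K c u) \<partial>lborel)"

definition Rgt :: "(nat \<Rightarrow> real \<Rightarrow> real) \<Rightarrow> (nat \<Rightarrow> real \<Rightarrow> real \<Rightarrow> real) \<Rightarrow> nat \<Rightarrow> nat \<Rightarrow> (particle \<Rightarrow> real) \<Rightarrow> real" where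
  "Rgt W K N c z = (\<Prod>j\<in>{Suc c..N}. W j (z (pt j))) * (\<Prod>j\<in>{c..<N}. K j (z (pt j)) (z (pt (Suc j))))"

fun bwd :: "(nat \<Rightarrow> real \<Rightarrow> real) \<Rightarrow> (nat \<Rightarrow> real \<Rightarrow> real \<Rightarrow> real) \<Rightarrow> nat \<Rightarrow> nat \<Rightarrow> real \<Rightarrow> ennreal" where
  "bwd W K N 0 v = 1"
| "bwd W K N (Suc d) v = (\<integral>\<^sup>+w. ennreal (K (N - Suc d) v w) * (ennreal (W (N - d) w) * bwd W K N d w) \<partial>lborel)"

lemma fwp_cong: "(\<And>j u. j < c \<Longrightarrow> W j u = W' j u) \<Longrightarrow> fwp W K c v = fwp W' K c v"
proof (induction c arbitrary: v)
  case (Suc c)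
  then show ?case by (simp add: less_Suc_eq)
qed simp

lemma fwp_mono: "(\<And>j u. W j u \<le> W' j u) \<Longrightarrow> fwp W K c v \<le> fwp W' K c v"
proof (induction c arbitrary: v)
  case (Suc c)
  show ?case
    by (simp, intro nn_integral_mono mult_left_mono mult_mono ennreal_leI Suc) auto
qed simp

definition RP :: "(real \<Rightarrow> ennreal) \<Rightarrow> (real \<Rightarrow> ennreal) \<Rightarrow> bool" where
  "RP A B \<longleftrightarrow> (\<forall>u w. u \<le> w \<longrightarrow> A w * B u \<le> A u * B w)"

lemma ennr_cross:
  fixes x y p q :: ennreal
  assumes "y \<le> x" "q \<le> p"
  shows "x * q + y * p \<le> x * p + y * q"
proof -
  obtain d where d: "x = y + d" using assms(1) by (auto simp: le_iff_add)
  obtain e where e: "p = q + e" using assms(2) by (auto simp: le_iff_add)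
  have "x * q + y * p = y*q + y*q + y*e + d*q" unfolding d e by (simp add: algebra_simps)
  also have "\<dots> \<le> y*q + y*q + y*e + d*q + d*e" by simp
  also have "\<dots> = x * p + y * q" unfolding d e by (simp add: algebra_simps)
  finally show ?thesis .
qed

lemma split_diag:
  fixes H :: "real \<Rightarrow> real \<Rightarrow> ennreal"
  assumes [measurable]: "case_prod H \<in> borel_measurable (lborel \<Otimes>\<^sub>M lborel)"
  shows "(\<integral>\<^sup>+u. \<integral>\<^sup>+w. H u w \<partial>lborel \<partial>lborel) = (\<integral>\<^sup>+u. \<integral>\<^sup>+w. (if u < w then H u w + H w u else 0) \<partial>lborel \<partial>lborel)"
proof -
  have [measurable]: "(\<lambda>(x, y). H y x) \<in> borel_measurable (lborel \<Otimes>\<^sub>M lborel)"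
    using measurable_pair_swap[OF assms] by (simp add: case_prod_beta)
  have "(\<integral>\<^sup>+u. \<integral>\<^sup>+w. H u w \<partial>lborel \<partial>lborel) =
      (\<integral>\<^sup>+u. (\<integral>\<^sup>+w. (if u < w then H u w else 0) \<partial>lborel) + (\<integral>\<^sup>+w. (if w < u then H u w else 0) \<partial>lborel) \<partial>lborel)"
  proof (intro nn_integral_cong)
    fix u :: real
    have "(\<integral>\<^sup>+w. H u w \<partial>lborel) = (\<integral>\<^sup>+w. (if u < w then H u w else 0) + (if w < u then H u w else 0) \<partial>lborel)"
      by (intro nn_integral_cong_AE) (use AE_lborel_singleton[of u] in \<open>auto elim!: eventually_mono\<close>)
    also have "\<dots> = (\<integral>\<^sup>+w. (if u < w then H u w else 0) \<partial>lborel) + (\<integral>\<^sup>+w. (if w < u then H u w else 0) \<partial>lborel)"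
      by (intro nn_integral_add) measurable
    finally show "(\<integral>\<^sup>+w. H u w \<partial>lborel) = (\<integral>\<^sup>+w. (if u < w then H u w else 0) \<partial>lborel) + (\<integral>\<^sup>+w. (if w < u then H u w else 0) \<partial>lborel)" .
  qed
  also have "\<dots> = (\<integral>\<^sup>+u. \<integral>\<^sup>+w. (if u < w then H u w else 0) \<partial>lborel \<partial>lborel) + (\<integral>\<^sup>+u. \<integral>\<^sup>+w. (if w < u then H u w else 0) \<partial>lborel \<partial>lborel)"
    by (intro nn_integral_add) measurable
  also have "(\<integral>\<^sup>+u. \<integral>\<^sup>+w. (if w < u then H u w else 0) \<partial>lborel \<partial>lborel) = (\<integral>\<^sup>+w. \<integral>\<^sup>+u. (if w < u then H u w else 0) \<partial>lborel \<partial>lborel)"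
    by (rule lborel_pair.Fubini'[symmetric]) measurable
  finally have 1: "(\<integral>\<^sup>+u. \<integral>\<^sup>+w. H u w \<partial>lborel \<partial>lborel) = (\<integral>\<^sup>+u. \<integral>\<^sup>+w. (if u < w then H u w else 0) \<partial>lborel \<partial>lborel) + (\<integral>\<^sup>+u. \<integral>\<^sup>+w. (if u < w then H w u else 0) \<partial>lborel \<partial>lborel)"
    by simp
  also have "\<dots> = (\<integral>\<^sup>+u. (\<integral>\<^sup>+w. (if u < w then H u w else 0) \<partial>lborel) + (\<integral>\<^sup>+w. (if u < w then H w u else 0) \<partial>lborel) \<partial>lborel)"
    by (intro nn_integral_add[symmetric]) measurable
  also have "\<dots> = (\<integral>\<^sup>+u. \<integral>\<^sup>+w. (if u < w then H u w + H w u else 0) \<partial>lborel \<partial>lborel)"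
  proof (intro nn_integral_cong)
    fix u :: real
    show "(\<integral>\<^sup>+w. (if u < w then H u w else 0) \<partial>lborel) + (\<integral>\<^sup>+w. (if u < w then H w u else 0) \<partial>lborel) = (\<integral>\<^sup>+w. (if u < w then H u w + H w u else 0) \<partial>lborel)"
      by (subst nn_integral_add[symmetric]) (measurable, auto intro!: nn_integral_cong)
  qed
  finally show ?thesis .
qed

lemma swap_le:
  fixes F G :: "real \<Rightarrow> real \<Rightarrow> ennreal"
  assumes "case_prod F \<in> borel_measurable (lborel \<Otimes>\<^sub>M lborel)"
    and "case_prod G \<in> borel_measurable (lborel \<Otimes>\<^sub>M lborel)"
    and "\<And>u w. u < w \<Longrightarrow> G u w + G w u \<le> F u w + F w u"
  shows "(\<integral>\<^sup>+u. \<integral>\<^sup>+w. G u w \<partial>lborel \<partial>lborel) \<le> (\<integral>\<^sup>+u. \<integral>\<^sup>+w. F u w \<partial>lborel \<partial>lborel)"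
  unfolding split_diag[OF assms(1)] split_diag[OF assms(2)]
  by (intro nn_integral_mono) (auto intro: assms(3))

lemma prod_int:
  fixes f g :: "real \<Rightarrow> ennreal"
  assumes [measurable]: "f \<in> borel_measurable lborel" "g \<in> borel_measurable lborel"
  shows "(\<integral>\<^sup>+u. f u \<partial>lborel) * (\<integral>\<^sup>+w. g w \<partial>lborel) = (\<integral>\<^sup>+u. \<integral>\<^sup>+w. f u * g w \<partial>lborel \<partial>lborel)"
  by (subst nn_integral_multc[symmetric]) (measurable, auto intro!: nn_integral_cong simp: nn_integral_cmult)

lemma tp2_step:
  fixes A B :: "real \<Rightarrow> ennreal" and Kc :: "real \<Rightarrow> real \<Rightarrow> real"
  assumes [measurable]: "A \<in> borel_measurable lborel" "B \<in> borel_measurable lborel"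
    "case_prod Kc \<in> borel_measurable (lborel \<Otimes>\<^sub>M lborel)"
    and Knn: "\<And>u v. 0 \<le> Kc u v"
    and RP: "RP A B"
    and TP2: "\<And>u w v v'. u \<le> w \<Longrightarrow> v \<le> v' \<Longrightarrow> Kc u v' * Kc w v \<le> Kc u v * Kc w v'"
  shows "RP (\<lambda>v. \<integral>\<^sup>+u. ennreal (Kc u v) * A u \<partial>lborel) (\<lambda>v. \<integral>\<^sup>+u. ennreal (Kc u v) * B u \<partial>lborel)"
  unfolding RP_def
proof (intro allI impI)
  fix v v' :: real assume vv: "v \<le> v'"
  have "(\<integral>\<^sup>+u. ennreal (Kc u v') * A u \<partial>lborel) * (\<integral>\<^sup>+u. ennreal (Kc u v) * B u \<partial>lborel)
      = (\<integral>\<^sup>+u. \<integral>\<^sup>+w. (ennreal (Kc u v') * A u) * (ennreal (Kc w v) * B w) \<partial>lborel \<partial>lborel)"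
    by (rule prod_int) measurable
  also have "\<dots> \<le> (\<integral>\<^sup>+u. \<integral>\<^sup>+w. (ennreal (Kc u v) * A u) * (ennreal (Kc w v') * B w) \<partial>lborel \<partial>lborel)"
  proof (rule swap_le)
    fix u w :: real assume uw: "u < w"
    let ?x = "A u * B w" and ?y = "A w * B u"
    let ?p = "ennreal (Kc u v * Kc w v')" and ?q = "ennreal (Kc u v' * Kc w v)"
    have "?y \<le> ?x" using RP uw unfolding RP_def by auto
    moreover have "?q \<le> ?p" using TP2[of u w v v'] uw vv by (intro ennreal_leI) auto
    ultimately have "?x * ?q + ?y * ?p \<le> ?x * ?p + ?y * ?q" by (rule ennr_cross)
    then show "ennreal (Kc u v') * A u * (ennreal (Kc w v) * B w) + ennreal (Kc w v') * A w * (ennreal (Kc u v) * B u)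
        \<le> ennreal (Kc u v) * A u * (ennreal (Kc w v') * B w) + ennreal (Kc w v) * A w * (ennreal (Kc u v') * B u)"
      using Knn by (simp add: ennreal_mult mult_ac)
  qed measurable
  also have "\<dots> = (\<integral>\<^sup>+u. ennreal (Kc u v) * A u \<partial>lborel) * (\<integral>\<^sup>+u. ennreal (Kc u v') * B u \<partial>lborel)"
    by (rule prod_int[symmetric]) measurable
  finally show "(\<integral>\<^sup>+u. ennreal (Kc u v') * A u \<partial>lborel) * (\<integral>\<^sup>+u. ennreal (Kc u v) * B u \<partial>lborel)
      \<le> (\<integral>\<^sup>+u. ennreal (Kc u v) * A u \<partial>lborel) * (\<integral>\<^sup>+u. ennreal (Kc u v') * B u \<partial>lborel)" .
qed

lemma cheb_gen:
  fixes A B :: "real \<Rightarrow> ennreal" and p :: "real \<Rightarrow> ennreal"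
  assumes [measurable]: "A \<in> borel_measurable lborel" "B \<in> borel_measurable lborel" "p \<in> borel_measurable lborel"
    and RP: "RP A B"
    and supp: "\<And>u. u \<notin> {0..1} \<Longrightarrow> A u = 0 \<and> B u = 0"
    and mono: "\<And>u w. 0 \<le> u \<Longrightarrow> u < w \<Longrightarrow> w \<le> 1 \<Longrightarrow> p w \<le> p u"
  shows "(\<integral>\<^sup>+u. A u \<partial>lborel) * (\<integral>\<^sup>+u. p u * B u \<partial>lborel) \<le> (\<integral>\<^sup>+u. p u * A u \<partial>lborel) * (\<integral>\<^sup>+u. B u \<partial>lborel)"
proof -
  have "(\<integral>\<^sup>+u. A u \<partial>lborel) * (\<integral>\<^sup>+u. p u * B u \<partial>lborel) = (\<integral>\<^sup>+u. \<integral>\<^sup>+w. A u * (p w * B w) \<partial>lborel \<partial>lborel)"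
    by (rule prod_int) measurable
  also have "\<dots> \<le> (\<integral>\<^sup>+u. \<integral>\<^sup>+w. (p u * A u) * B w \<partial>lborel \<partial>lborel)"
  proof (rule swap_le)
    fix u w :: real assume uw: "u < w"
    let ?x = "A u * B w" and ?y = "A w * B u"
    show "A u * (p w * B w) + A w * (p u * B u) \<le> p u * A u * B w + p w * A w * B u"
    proof (cases "u \<in> {0..1} \<and> w \<in> {0..1}")
      case True
      have "?y \<le> ?x" using RP uw unfolding RP_def by auto
      moreover have "p w \<le> p u" using True uw by (intro mono) auto
      ultimately have "?x * p w + ?y * p u \<le> ?x * p u + ?y * p w" by (rule ennr_cross)
      then show ?thesis by (simp add: mult_ac)
    next
      case False
      then have "(A u = 0 \<and> B u = 0) \<or> (A w = 0 \<and> B w = 0)" using supp by blast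
      then show ?thesis by auto
    qed
  qed measurable
  also have "\<dots> = (\<integral>\<^sup>+u. p u * A u \<partial>lborel) * (\<integral>\<^sup>+u. B u \<partial>lborel)"
    by (rule prod_int[symmetric]) measurable
  finally show ?thesis .
qed

locale chainm =
  fixes W :: "nat \<Rightarrow> real \<Rightarrow> real" and K :: "nat \<Rightarrow> real \<Rightarrow> real \<Rightarrow> real" and N :: nat
  assumes Wm: "\<And>j. j \<le> N \<Longrightarrow> W j \<in> borel_measurable lborel"
    and Km: "\<And>j. j < N \<Longrightarrow> case_prod (K j) \<in> borel_measurable (lborel \<Otimes>\<^sub>M lborel)"
    and Wnn: "\<And>j x. 0 \<le> W j x"
    and Knn0: "\<And>j x y. j < N \<Longrightarrow> 0 \<le> K j x y"
begin

lemma fwp_meas[measurable]: "c \<le> N \<Longrightarrow> fwp W K c \<in> borel_measurable lborel"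
proof (induction c)
  case 0 then show ?case by simp
next
  case (Suc c)
  then have [measurable]: "fwp W K c \<in> borel_measurable lborel" by simp
  have [measurable]: "W c \<in> borel_measurable lborel" using Suc.prems by (intro Wm) simp
  have [measurable]: "case_prod (K c) \<in> borel_measurable (lborel \<Otimes>\<^sub>M lborel)"
    using Suc.prems by (intro Km) simp
  show ?case by simp measurable
qed

lemma Lft_cong: "(\<And>j. j \<le> c \<Longrightarrow> z (pt j) = z' (pt j)) \<Longrightarrow> Lft W K c z = Lft W K c z'"
  unfolding Lft_def by (intro arg_cong2[where f="(*)"] prod.cong) auto

lemma Lft_Suc: "Lft W K (Suc c) z = Lft W K c z * (W c (z (pt c)) * K c (z (pt c)) (z (pt (Suc c))))"
  unfolding Lft_def by (simp add: algebra_simps)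

lemma Lft_nn: "c \<le> N \<Longrightarrow> 0 \<le> Lft W K c z"
  unfolding Lft_def using Wnn Knn0 by (intro mult_nonneg_nonneg prod_nonneg) auto

lemma Lft_meas:
  assumes "c \<le> N" "pt ` {..c} \<subseteq> I"
  shows "(\<lambda>z. Lft W K c z) \<in> borel_measurable (PiM I (\<lambda>_. lborel))"
proof -
  have C: "(\<lambda>z. z (pt j)) \<in> borel_measurable (PiM I (\<lambda>_. lborel))" if "j \<le> c" for j
    using assms that by (intro measurable_component_singleton[where M="\<lambda>_. lborel", simplified]) auto
  have 1: "(\<lambda>z. W j (z (pt j))) \<in> borel_measurable (PiM I (\<lambda>_. lborel))" if "j < c" for j
  proof -
    have [measurable]: "W j \<in> borel_measurable lborel" using assms that by (intro Wm) auto
    have [measurable]: "(\<lambda>z. z (pt j)) \<in> borel_measurable (PiM I (\<lambda>_. lborel))" using C that by (metis Suc_leI less_imp_le)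
    have [simp]: "pt j \<in> I" using assms that by auto
    show ?thesis by measurable
  qed
  have 2: "(\<lambda>z. K j (z (pt j)) (z (pt (Suc j)))) \<in> borel_measurable (PiM I (\<lambda>_. lborel))" if "j < c" for j
  proof -
    have [measurable]: "case_prod (K j) \<in> borel_measurable (lborel \<Otimes>\<^sub>M lborel)" using assms that by (intro Km) auto
    have [measurable]: "(\<lambda>z. z (pt j)) \<in> borel_measurable (PiM I (\<lambda>_. lborel))" using C that by (metis Suc_leI less_imp_le)
    have [measurable]: "(\<lambda>z. z (pt (Suc j))) \<in> borel_measurable (PiM I (\<lambda>_. lborel))" using C that by (metis Suc_leI less_imp_le)
    have [simp]: "pt j \<in> I" "pt (Suc j) \<in> I" using that by (intro subsetD[OF assms(2)] imageI; simp)+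
    show ?thesis by measurable
  qed
  show ?thesis unfolding Lft_def
    by (intro borel_measurable_times borel_measurable_prod) (use 1 2 in auto)
qed

lemma upd_meas: "(\<lambda>x. x(i := y)) \<in> measurable (PiM I (\<lambda>_. lborel)) (PiM (insert i I) (\<lambda>_. lborel::real measure))"
  by (rule measurable_fun_upd[where J=I]) auto

interpretation P: product_sigma_finite "\<lambda>_. lborel::real measure" by standard

lemma left_int:
  assumes "c \<le> N"
  shows "(\<integral>\<^sup>+z. ennreal (Lft W K c (z(pt c := v))) \<partial>PiM (pt ` {..<c}) (\<lambda>_. lborel)) = fwp W K c v"
  using assms
proof (induction c arbitrary: v)
  case 0
  then show ?case by (simp add: Lft_def PiM_empty)
next
  case (Suc c)
  have ins: "pt ` {..<Suc c} = insert (pt c) (pt ` {..<c})" by (auto simp: lessThan_Suc)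
  have nin: "pt c \<notin> pt ` {..<c}" by auto
  have "(\<integral>\<^sup>+z. ennreal (Lft W K (Suc c) (z(pt (Suc c) := v))) \<partial>PiM (pt ` {..<Suc c}) (\<lambda>_. lborel))
     = (\<integral>\<^sup>+y. \<integral>\<^sup>+x. ennreal (Lft W K (Suc c) ((x(pt c := y))(pt (Suc c) := v))) \<partial>PiM (pt ` {..<c}) (\<lambda>_. lborel) \<partial>lborel)"
    unfolding ins
  proof (rule P.product_nn_integral_insert_rev)
    show "finite (pt ` {..<c})" by auto
    show "pt c \<notin> pt ` {..<c}" by auto
    have "(\<lambda>z. Lft W K (Suc c) (z(pt (Suc c) := v))) \<in> borel_measurable (PiM (insert (pt c) (pt ` {..<c})) (\<lambda>_. lborel))"
    proof -
      have e: "(\<lambda>z. Lft W K (Suc c) (z(pt (Suc c) := v))) = (\<lambda>z. Lft W K c z * (W c (z (pt c)) * K c (z (pt c)) v))"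
        by (rule ext) (simp add: Lft_Suc cong: Lft_cong)
      have [measurable]: "(\<lambda>z. z (pt c)) \<in> borel_measurable (PiM (insert (pt c) (pt ` {..<c})) (\<lambda>_. lborel))"
        by (intro measurable_component_singleton[where M="\<lambda>_. lborel", simplified]) auto
      have [measurable]: "W c \<in> borel_measurable lborel" using Suc.prems by (intro Wm) auto
      have [measurable]: "case_prod (K c) \<in> borel_measurable (lborel \<Otimes>\<^sub>M lborel)"
        using Suc.prems by (intro Km) auto
      have [measurable]: "(\<lambda>z. Lft W K c z) \<in> borel_measurable (PiM (insert (pt c) (pt ` {..<c})) (\<lambda>_. lborel))"
        using Suc.prems by (intro Lft_meas) (auto simp: atMost_Suc lessThan_Suc_atMost[symmetric])
      show ?thesis unfolding e by measurable
    qed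
    then show "(\<lambda>z. ennreal (Lft W K (Suc c) (z(pt (Suc c) := v)))) \<in> borel_measurable (PiM (insert (pt c) (pt ` {..<c})) (\<lambda>_. lborel))"
      by measurable
  qed
  also have "\<dots> = (\<integral>\<^sup>+y. ennreal (K c y v) * (ennreal (W c y) * fwp W K c y) \<partial>lborel)"
  proof (rule nn_integral_cong)
    fix y :: real
    have "(\<integral>\<^sup>+x. ennreal (Lft W K (Suc c) ((x(pt c := y))(pt (Suc c) := v))) \<partial>PiM (pt ` {..<c}) (\<lambda>_. lborel))
        = (\<integral>\<^sup>+x. ennreal (K c y v * W c y) * ennreal (Lft W K c (x(pt c := y))) \<partial>PiM (pt ` {..<c}) (\<lambda>_. lborel))"
    proof (rule nn_integral_cong)
      fix x :: "particle \<Rightarrow> real"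
      have "Lft W K c ((x(pt c := y))(pt (Suc c) := v)) = Lft W K c (x(pt c := y))"
        by (rule Lft_cong) auto
      then show "ennreal (Lft W K (Suc c) ((x(pt c := y))(pt (Suc c) := v))) = ennreal (K c y v * W c y) * ennreal (Lft W K c (x(pt c := y)))"
        using Wnn Knn0[of c] Lft_nn[of c] Suc.prems by (simp add: Lft_Suc ennreal_mult[symmetric] mult_ac)
    qed
    also have "\<dots> = ennreal (K c y v * W c y) * (\<integral>\<^sup>+x. ennreal (Lft W K c (x(pt c := y))) \<partial>PiM (pt ` {..<c}) (\<lambda>_. lborel))"
    proof (rule nn_integral_cmult)
      have [measurable]: "(\<lambda>z. Lft W K c z) \<in> borel_measurable (PiM (insert (pt c) (pt ` {..<c})) (\<lambda>_. lborel))"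
        using Suc.prems by (intro Lft_meas) (auto simp: atMost_Suc lessThan_Suc_atMost[symmetric])
      show "(\<lambda>x. ennreal (Lft W K c (x(pt c := y)))) \<in> borel_measurable (PiM (pt ` {..<c}) (\<lambda>_. lborel))"
        using measurable_comp[OF measurable_component_update[OF _ nin] \<open>(\<lambda>z. Lft W K c z) \<in> _\<close>]
        by (simp add: comp_def) 
    qed
    also have "\<dots> = ennreal (K c y v) * (ennreal (W c y) * fwp W K c y)"
    proof -
      have ih: "(\<integral>\<^sup>+x. ennreal (Lft W K c (x(pt c := y))) \<partial>PiM (pt ` {..<c}) (\<lambda>_. lborel)) = fwp W K c y"
        using Suc.prems by (intro Suc.IH) simp
      show ?thesis unfolding ih using Wnn Knn0[of c] Suc.prems by (simp add: ennreal_mult mult_ac)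
    qed
    finally show "(\<integral>\<^sup>+x. ennreal (Lft W K (Suc c) ((x(pt c := y))(pt (Suc c) := v))) \<partial>PiM (pt ` {..<c}) (\<lambda>_. lborel))
        = ennreal (K c y v) * (ennreal (W c y) * fwp W K c y)" .
  qed
  also have "\<dots> = fwp W K (Suc c) v" by simp
  finally show ?case .
qed

lemma Rgt_cong: "(\<And>j. c \<le> j \<Longrightarrow> j \<le> N \<Longrightarrow> z (pt j) = z' (pt j)) \<Longrightarrow> Rgt W K N c z = Rgt W K N c z'"
  unfolding Rgt_def by (intro arg_cong2[where f="(*)"] prod.cong) auto

lemma Rgt_Suc: "c < N \<Longrightarrow> Rgt W K N c z = (W (Suc c) (z (pt (Suc c))) * K c (z (pt c)) (z (pt (Suc c)))) * Rgt W K N (Suc c) z"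
  unfolding Rgt_def by (simp add: prod.atLeast_Suc_atMost prod.atLeast_Suc_lessThan algebra_simps)

lemma Rgt_nn: "0 \<le> Rgt W K N c z"
  unfolding Rgt_def using Wnn Knn0 by (intro mult_nonneg_nonneg prod_nonneg) auto

lemma Rgt_meas:
  assumes "pt ` {c..N} \<subseteq> I"
  shows "(\<lambda>z. Rgt W K N c z) \<in> borel_measurable (PiM I (\<lambda>_. lborel))"
proof -
  have C: "(\<lambda>z. z (pt j)) \<in> borel_measurable (PiM I (\<lambda>_. lborel))" if "c \<le> j" "j \<le> N" for j
    using assms that by (intro measurable_component_singleton[where M="\<lambda>_. lborel", simplified]) auto
  have 1: "(\<lambda>z. W j (z (pt j))) \<in> borel_measurable (PiM I (\<lambda>_. lborel))" if "j \<in> {Suc c..N}" for j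
  proof -
    have [measurable]: "W j \<in> borel_measurable lborel" using assms that by (intro Wm) auto
    have [measurable]: "(\<lambda>z. z (pt j)) \<in> borel_measurable (PiM I (\<lambda>_. lborel))" using that by (intro C) auto
    have [simp]: "pt j \<in> I" using that by (intro subsetD[OF assms(1)] imageI; simp)+
    show ?thesis by measurable
  qed
  have 2: "(\<lambda>z. K j (z (pt j)) (z (pt (Suc j)))) \<in> borel_measurable (PiM I (\<lambda>_. lborel))" if "j \<in> {c..<N}" for j
  proof -
    have [measurable]: "case_prod (K j) \<in> borel_measurable (lborel \<Otimes>\<^sub>M lborel)" using assms that by (intro Km) auto
    have [measurable]: "(\<lambda>z. z (pt j)) \<in> borel_measurable (PiM I (\<lambda>_. lborel))" using that by (intro C) auto
    have [measurable]: "(\<lambda>z. z (pt (Suc j))) \<in> borel_measurable (PiM I (\<lambda>_. lborel))" using that by (intro C) auto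
    have [simp]: "pt j \<in> I" "pt (Suc j) \<in> I" using that by (intro subsetD[OF assms(1)] imageI; simp)+
    show ?thesis by measurable
  qed
  show ?thesis unfolding Rgt_def
    by (intro borel_measurable_times borel_measurable_prod) (use 1 2 in auto)
qed

lemma right_int_aux:
  "N - c = d \<Longrightarrow> c \<le> N \<Longrightarrow>
   (\<integral>\<^sup>+z. ennreal (Rgt W K N c (z(pt c := v))) \<partial>PiM (pt ` {Suc c..N}) (\<lambda>_. lborel)) = bwd W K N d v"
proof (induction d arbitrary: c v)
  case 0
  then have "c = N" by simp
  then show ?case by (simp add: Rgt_def PiM_empty)
next
  case (Suc d)
  then have cN: "c < N" and c: "c = N - Suc d" and d: "N - Suc c = d" by auto
  have ins: "pt ` {Suc c..N} = insert (pt (Suc c)) (pt ` {Suc (Suc c)..N})"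
    using cN by (auto simp: atLeastAtMost_insertL[symmetric])
  have nin: "pt (Suc c) \<notin> pt ` {Suc (Suc c)..N}" by auto
  have [measurable]: "(\<lambda>z. Rgt W K N (Suc c) z) \<in> borel_measurable (PiM (insert (pt (Suc c)) (pt ` {Suc (Suc c)..N})) (\<lambda>_. lborel))"
    using cN by (intro Rgt_meas) (auto simp: atLeastAtMost_insertL[symmetric])
  have "(\<integral>\<^sup>+z. ennreal (Rgt W K N c (z(pt c := v))) \<partial>PiM (pt ` {Suc c..N}) (\<lambda>_. lborel))
     = (\<integral>\<^sup>+y. \<integral>\<^sup>+x. ennreal (Rgt W K N c ((x(pt (Suc c) := y))(pt c := v))) \<partial>PiM (pt ` {Suc (Suc c)..N}) (\<lambda>_. lborel) \<partial>lborel)"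
    unfolding ins
  proof (rule P.product_nn_integral_insert_rev)
    show "finite (pt ` {Suc (Suc c)..N})" by auto
    show "pt (Suc c) \<notin> pt ` {Suc (Suc c)..N}" by auto
    have e: "\<And>z. Rgt W K N c (z(pt c := v)) = (W (Suc c) (z (pt (Suc c))) * K c v (z (pt (Suc c)))) * Rgt W K N (Suc c) z"
      using cN by (simp add: Rgt_Suc cong: Rgt_cong)
    have [measurable]: "(\<lambda>z. z (pt (Suc c))) \<in> borel_measurable (PiM (insert (pt (Suc c)) (pt ` {Suc (Suc c)..N})) (\<lambda>_. lborel))"
      by (intro measurable_component_singleton[where M="\<lambda>_. lborel", simplified]) auto
    have [measurable]: "W (Suc c) \<in> borel_measurable lborel" using cN by (intro Wm) auto
    have [measurable]: "case_prod (K c) \<in> borel_measurable (lborel \<Otimes>\<^sub>M lborel)"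
      using cN by (intro Km) auto
    show "(\<lambda>z. ennreal (Rgt W K N c (z(pt c := v)))) \<in> borel_measurable (PiM (insert (pt (Suc c)) (pt ` {Suc (Suc c)..N})) (\<lambda>_. lborel))"
      by (simp only: e) measurable
  qed
  also have "\<dots> = (\<integral>\<^sup>+y. ennreal (K c v y) * (ennreal (W (Suc c) y) * bwd W K N d y) \<partial>lborel)"
  proof (rule nn_integral_cong)
    fix y :: real
    have "(\<integral>\<^sup>+x. ennreal (Rgt W K N c ((x(pt (Suc c) := y))(pt c := v))) \<partial>PiM (pt ` {Suc (Suc c)..N}) (\<lambda>_. lborel))
        = (\<integral>\<^sup>+x. ennreal (K c v y * W (Suc c) y) * ennreal (Rgt W K N (Suc c) (x(pt (Suc c) := y))) \<partial>PiM (pt ` {Suc (Suc c)..N}) (\<lambda>_. lborel))"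
    proof (rule nn_integral_cong)
      fix x :: "particle \<Rightarrow> real"
      have "Rgt W K N (Suc c) ((x(pt (Suc c) := y))(pt c := v)) = Rgt W K N (Suc c) (x(pt (Suc c) := y))"
        by (rule Rgt_cong) auto
      then show "ennreal (Rgt W K N c ((x(pt (Suc c) := y))(pt c := v))) = ennreal (K c v y * W (Suc c) y) * ennreal (Rgt W K N (Suc c) (x(pt (Suc c) := y)))"
        using Wnn Knn0[of c] Rgt_nn cN by (simp add: Rgt_Suc ennreal_mult[symmetric] mult_ac)
    qed
    also have "\<dots> = ennreal (K c v y * W (Suc c) y) * (\<integral>\<^sup>+x. ennreal (Rgt W K N (Suc c) (x(pt (Suc c) := y))) \<partial>PiM (pt ` {Suc (Suc c)..N}) (\<lambda>_. lborel))"
    proof (rule nn_integral_cmult)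
      show "(\<lambda>x. ennreal (Rgt W K N (Suc c) (x(pt (Suc c) := y)))) \<in> borel_measurable (PiM (pt ` {Suc (Suc c)..N}) (\<lambda>_. lborel))"
        using measurable_comp[OF measurable_component_update[OF _ nin] \<open>(\<lambda>z. Rgt W K N (Suc c) z) \<in> _\<close>]
        by (simp add: comp_def)
    qed
    also have "\<dots> = ennreal (K c v y) * (ennreal (W (Suc c) y) * bwd W K N d y)"
    proof -
      have ih: "(\<integral>\<^sup>+x. ennreal (Rgt W K N (Suc c) (x(pt (Suc c) := y))) \<partial>PiM (pt ` {Suc (Suc c)..N}) (\<lambda>_. lborel)) = bwd W K N d y"
        using cN d by (intro Suc.IH) auto
      show ?thesis unfolding ih using Wnn Knn0[of c] cN by (simp add: ennreal_mult mult_ac)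
    qed
    finally show "(\<integral>\<^sup>+x. ennreal (Rgt W K N c ((x(pt (Suc c) := y))(pt c := v))) \<partial>PiM (pt ` {Suc (Suc c)..N}) (\<lambda>_. lborel))
        = ennreal (K c v y) * (ennreal (W (Suc c) y) * bwd W K N d y)" .
  qed
  also have "\<dots> = bwd W K N (Suc d) v"
    using c d cN by (simp add: Suc_diff_Suc)
  finally show ?case .
qed

lemma chd_Lft: "chd W K N z = Lft W K N z * W N (z (pt N))"
  unfolding chd_def Lft_def by (simp add: atLeast0AtMost lessThan_Suc_atMost[symmetric] algebra_simps)

lemma chd_split: "c \<le> N \<Longrightarrow> chd W K N z = Lft W K c z * W c (z (pt c)) * Rgt W K N c z"
proof -
  assume cN: "c \<le> N"
  have 1: "{0..N} = {..<c} \<union> ({c} \<union> {Suc c..N})" using cN by auto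
  have 2: "{..<N} = {..<c} \<union> {c..<N}" using cN by auto
  have a: "(\<Prod>j\<in>{0..N}. W j (z (pt j))) = (\<Prod>j<c. W j (z (pt j))) * (W c (z (pt c)) * (\<Prod>j\<in>{Suc c..N}. W j (z (pt j))))"
    unfolding 1 by (subst prod.union_disjoint; (subst prod.union_disjoint)?) auto
  have b: "(\<Prod>j<N. K j (z (pt j)) (z (pt (Suc j)))) = (\<Prod>j<c. K j (z (pt j)) (z (pt (Suc j)))) * (\<Prod>j\<in>{c..<N}. K j (z (pt j)) (z (pt (Suc j))))"
    unfolding 2 by (subst prod.union_disjoint) auto
  show ?thesis unfolding chd_def Lft_def Rgt_def a b by (simp add: algebra_simps)
qed

lemma chd_nn: "0 \<le> chd W K N z"
  unfolding chd_def using Wnn Knn0 by (intro mult_nonneg_nonneg prod_nonneg) auto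

lemma chd_upd_meas:
  assumes "pt ` {0..N} \<subseteq> insert p I" "p \<notin> I"
  shows "(\<lambda>z. chd W K N (z(p := v))) \<in> borel_measurable (PiM I (\<lambda>_. lborel))"
proof -
  have [measurable]: "W N \<in> borel_measurable lborel" by (intro Wm) auto
  have "pt ` {..N} \<subseteq> insert p I" using assms(1) by (simp add: atLeast0AtMost)
  then have [measurable]: "(\<lambda>z. Lft W K N z) \<in> borel_measurable (PiM (insert p I) (\<lambda>_. lborel))"
    by (intro Lft_meas) auto
  have "pt N \<in> pt ` {0..N}" by simp
  then have "pt N \<in> insert p I" using assms(1) by blast
  then have cp: "(\<lambda>z. z (pt N)) \<in> measurable (PiM (insert p I) (\<lambda>_. lborel)) lborel"
    by (rule measurable_component_singleton)
  have c1: "(\<lambda>z. W N (z (pt N))) \<in> borel_measurable (PiM (insert p I) (\<lambda>_. lborel))"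
    by (rule measurable_compose[OF cp]) (intro Wm, simp)
  have m: "(\<lambda>z. chd W K N z) \<in> borel_measurable (PiM (insert p I) (\<lambda>_. lborel))"
    unfolding chd_Lft by (intro borel_measurable_times c1) fact
  show ?thesis
    using measurable_comp[OF upd_meas m] by (simp add: comp_def)
qed

lemma cond_int:
  assumes cN: "c \<le> N"
  shows "(\<integral>\<^sup>+z. ennreal (chd W K N (z(pt c := v))) \<partial>PiM (pt ` {0..N} - {pt c}) (\<lambda>_. lborel))
    = fwp W K c v * ennreal (W c v) * bwd W K N (N - c) v"
proof -
  let ?I = "pt ` {..<c}" and ?J = "pt ` {Suc c..N}"
  have "{0..N} - {c} = {..<c} \<union> {Suc c..N}" using cN by auto
  then have IJ: "pt ` {0..N} - {pt c} = ?I \<union> ?J"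
    by (metis image_Un image_empty image_insert image_set_diff inj_pt)
  have disj: "?I \<inter> ?J = {}" by auto
  have [measurable]: "(\<lambda>z. Lft W K c z) \<in> borel_measurable (PiM (insert (pt c) ?I) (\<lambda>_. lborel))"
    using cN by (intro Lft_meas) (auto simp: lessThan_Suc_atMost[symmetric] lessThan_Suc)
  have [measurable]: "(\<lambda>z. Rgt W K N c z) \<in> borel_measurable (PiM (insert (pt c) ?J) (\<lambda>_. lborel))"
    using cN by (intro Rgt_meas) auto
  have mL: "(\<lambda>x. ennreal (Lft W K c (x(pt c := v)))) \<in> borel_measurable (PiM ?I (\<lambda>_. lborel))"
    using measurable_comp[OF upd_meas \<open>(\<lambda>z. Lft W K c z) \<in> _\<close>]
    by (simp add: comp_def)
  have mR: "(\<lambda>x. ennreal (Rgt W K N c (x(pt c := v)))) \<in> borel_measurable (PiM ?J (\<lambda>_. lborel))"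
    using measurable_comp[OF upd_meas \<open>(\<lambda>z. Rgt W K N c z) \<in> _\<close>]
    by (simp add: comp_def)
  have "(\<integral>\<^sup>+z. ennreal (chd W K N (z(pt c := v))) \<partial>PiM (pt ` {0..N} - {pt c}) (\<lambda>_. lborel))
     = (\<integral>\<^sup>+x. \<integral>\<^sup>+y. ennreal (chd W K N ((merge ?I ?J (x, y))(pt c := v))) \<partial>PiM ?J (\<lambda>_. lborel) \<partial>PiM ?I (\<lambda>_. lborel))"
    unfolding IJ
  proof (rule P.product_nn_integral_fold[OF disj])
    show "(\<lambda>z. ennreal (chd W K N (z(pt c := v)))) \<in> borel_measurable (PiM (?I \<union> ?J) (\<lambda>_. lborel))"
    proof -
      have m: "(\<lambda>z. chd W K N (z(pt c := v))) \<in> borel_measurable (PiM (?I \<union> ?J) (\<lambda>_. lborel))"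
        by (rule chd_upd_meas) (use IJ in auto)
      show ?thesis by (rule measurable_compose[OF m measurable_ennreal])
    qed
  qed auto
  also have "\<dots> = (\<integral>\<^sup>+x. \<integral>\<^sup>+y. ennreal (Lft W K c (x(pt c := v)) * W c v) * ennreal (Rgt W K N c (y(pt c := v))) \<partial>PiM ?J (\<lambda>_. lborel) \<partial>PiM ?I (\<lambda>_. lborel))"
  proof (intro nn_integral_cong)
    fix x y :: "particle \<Rightarrow> real"
    let ?z = "(merge ?I ?J (x, y))(pt c := v)"
    have "Lft W K c ?z = Lft W K c (x(pt c := v))"
      by (rule Lft_cong) (auto simp: merge_def)
    moreover have "Rgt W K N c ?z = Rgt W K N c (y(pt c := v))"
      by (rule Rgt_cong) (auto simp: merge_def)
    ultimately show "ennreal (chd W K N ?z) = ennreal (Lft W K c (x(pt c := v)) * W c v) * ennreal (Rgt W K N c (y(pt c := v)))"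
      using chd_split[OF cN, of ?z] Lft_nn[OF cN] Rgt_nn Wnn by (simp add: ennreal_mult[symmetric])
  qed
  also have "\<dots> = (\<integral>\<^sup>+x. ennreal (Lft W K c (x(pt c := v)) * W c v) * bwd W K N (N - c) v \<partial>PiM ?I (\<lambda>_. lborel))"
    by (intro nn_integral_cong, subst nn_integral_cmult[OF mR], subst right_int_aux[OF refl cN]) simp
  also have "\<dots> = (\<integral>\<^sup>+x. ennreal (Lft W K c (x(pt c := v))) \<partial>PiM ?I (\<lambda>_. lborel)) * ennreal (W c v) * bwd W K N (N - c) v"
    using mL Lft_nn[OF cN] Wnn
    by (simp add: ennreal_mult nn_integral_multc[symmetric] mult.assoc)
  also have "\<dots> = fwp W K c v * ennreal (W c v) * bwd W K N (N - c) v"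
    using left_int[OF cN] by simp
  finally show ?thesis .
qed

lemma full_int:
  "(\<integral>\<^sup>+z. ennreal (chd W K N z) \<partial>PiM (pt ` {0..N}) (\<lambda>_. lborel))
    = (\<integral>\<^sup>+v. fwp W K N v * ennreal (W N v) \<partial>lborel)"
proof -
  have ins: "pt ` {0..N} = insert (pt N) (pt ` {0..N} - {pt N})" by auto
  have "(\<integral>\<^sup>+z. ennreal (chd W K N z) \<partial>PiM (pt ` {0..N}) (\<lambda>_. lborel))
     = (\<integral>\<^sup>+v. \<integral>\<^sup>+z. ennreal (chd W K N (z(pt N := v))) \<partial>PiM (pt ` {0..N} - {pt N}) (\<lambda>_. lborel) \<partial>lborel)"
  proof (subst ins, rule P.product_nn_integral_insert_rev)
    have "pt ` {..N} \<subseteq> insert (pt N) (pt ` {0..N} - {pt N})" by auto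
    then have [measurable]: "(\<lambda>z. Lft W K N z) \<in> borel_measurable (PiM (insert (pt N) (pt ` {0..N} - {pt N})) (\<lambda>_. lborel))"
      by (intro Lft_meas) auto
    have [measurable]: "W N \<in> borel_measurable lborel" by (intro Wm) auto
    show "(\<lambda>z. ennreal (chd W K N z)) \<in> borel_measurable (PiM (insert (pt N) (pt ` {0..N} - {pt N})) (\<lambda>_. lborel))"
      unfolding chd_Lft by measurable
  qed auto
  also have "\<dots> = (\<integral>\<^sup>+v. fwp W K N v * ennreal (W N v) \<partial>lborel)"
    by (intro nn_integral_cong) (simp add: cond_int)
  finally show ?thesis .
qed

end

definition ft :: "(real \<Rightarrow> real) \<Rightarrow> real \<Rightarrow> real" where
  "ft \<phi> x = (if x \<in> {0..1} then \<phi> x else 0)"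

lemma ft_nn: "sw_admissible \<phi> \<Longrightarrow> 0 \<le> ft \<phi> x"
  unfolding ft_def sw_admissible_def by auto

lemma mvt_ln:
  fixes \<phi> \<phi>' :: "real \<Rightarrow> real"
  assumes der: "\<And>x. x \<in> {0..1} \<Longrightarrow> (\<phi> has_real_derivative \<phi>' x) (at x within {0..1})"
    and pos: "\<And>x. x \<in> {a..b} \<Longrightarrow> 0 < \<phi> x"
    and ab: "0 \<le> a" "a < b" "b \<le> 1"
  shows "\<exists>\<xi>\<in>{a<..<b}. ln (\<phi> b) - ln (\<phi> a) = \<phi>' \<xi> / \<phi> \<xi> * (b - a)"
proof -
  have "\<exists>x\<in>{a<..<b}. ln (\<phi> b) - ln (\<phi> a) = (\<lambda>x. (*) (\<phi>' x / \<phi> x)) x (b - a)"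
  proof (rule mvt_simple[OF ab(2)])
    fix x assume x: "a \<le> x" "x \<le> b"
    have d: "(\<phi> has_real_derivative \<phi>' x) (at x within {a..b})"
      by (rule DERIV_subset[OF der]) (use x ab in auto)
    have "((\<lambda>x. ln (\<phi> x)) has_real_derivative (1 / \<phi> x) * \<phi>' x) (at x within {a..b})"
      by (rule DERIV_chain2[OF DERIV_ln_divide d]) (use pos x in auto)
    then show "((\<lambda>x. ln (\<phi> x)) has_derivative (*) (\<phi>' x / \<phi> x)) (at x within {a..b})"
      by (simp add: has_field_derivative_def)
  qed
  then show ?thesis by auto
qed

lemma lc_ineq:
  assumes adm: "sw_admissible \<phi>" and lc: "sw_logconcave \<phi>"
    and h: "d1 \<le> a" "a \<le> b" "b \<le> d2" "a + b = d1 + d2"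
  shows "ft \<phi> d1 * ft \<phi> d2 \<le> ft \<phi> a * ft \<phi> b"
proof -
  have nn: "\<And>x. 0 \<le> ft \<phi> x" using adm by (rule ft_nn)
  obtain \<phi>' where der: "\<And>x. x \<in> {0..1} \<Longrightarrow> (\<phi> has_real_derivative \<phi>' x) (at x within {0..1})"
    and am: "antimono_on {0<..1} (\<lambda>x. \<phi>' x / \<phi> x)" and posi: "\<And>x. x \<in> {0<..1} \<Longrightarrow> 0 < \<phi> x"
    using lc unfolding sw_logconcave_def by blast
  show ?thesis
  proof (cases "d1 \<in> {0..1} \<and> d2 \<in> {0..1} \<and> \<phi> d1 \<noteq> 0")
    case False
    then have "ft \<phi> d1 * ft \<phi> d2 = 0" unfolding ft_def by auto
    then show ?thesis using nn[of a] nn[of b] by (metis mult_nonneg_nonneg)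
  next
    case True
    then have d: "0 \<le> d1" "d2 \<le> 1" "\<phi> d1 \<noteq> 0" by auto
    have p1: "0 < \<phi> d1" using d adm h unfolding sw_admissible_def by (metis atLeastAtMost_iff less_eq_real_def order.trans)
    have pos: "0 < \<phi> x" if "d1 \<le> x" "x \<le> 1" for x
    proof (cases "x = d1")
      case True then show ?thesis using p1 by simp
    next
      case False then show ?thesis using that d by (intro posi) auto
    qed
    have ab01: "a \<in> {0..1}" "b \<in> {0..1}" using d h by auto
    show ?thesis
    proof (cases "d1 = a")
      case True
      then have "b = d2" using h by simp
      then show ?thesis using True by simp
    next
      case False
      then have lt: "d1 < a" "b < d2" using h by auto
      obtain \<xi>1 where x1: "\<xi>1 \<in> {d1<..<a}" "ln (\<phi> a) - ln (\<phi> d1) = \<phi>' \<xi>1 / \<phi> \<xi>1 * (a - d1)"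
        using mvt_ln[OF der _ d(1) lt(1)] pos h d by (metis atLeastAtMost_iff order.trans)
      obtain \<xi>2 where x2: "\<xi>2 \<in> {b<..<d2}" "ln (\<phi> d2) - ln (\<phi> b) = \<phi>' \<xi>2 / \<phi> \<xi>2 * (d2 - b)"
        using mvt_ln[OF der _ _ lt(2) d(2)] pos h d by (metis atLeastAtMost_iff order.trans)
      have "\<phi>' \<xi>2 / \<phi> \<xi>2 \<le> \<phi>' \<xi>1 / \<phi> \<xi>1"
        using am x1(1) x2(1) h d unfolding monotone_on_def by auto
      then have "\<phi>' \<xi>2 / \<phi> \<xi>2 * (a - d1) \<le> \<phi>' \<xi>1 / \<phi> \<xi>1 * (a - d1)"
        using lt by (intro mult_right_mono) auto
      moreover have "d2 - b = a - d1" using h by linarith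
      ultimately have "\<phi>' \<xi>2 / \<phi> \<xi>2 * (d2 - b) \<le> \<phi>' \<xi>1 / \<phi> \<xi>1 * (a - d1)" by simp
      then have "ln (\<phi> d1) + ln (\<phi> d2) \<le> ln (\<phi> a) + ln (\<phi> b)" using x1 x2 by linarith
      then have "ln (\<phi> d1 * \<phi> d2) \<le> ln (\<phi> a * \<phi> b)"
      proof -
        have "0 < \<phi> a" "0 < \<phi> b" "0 < \<phi> d2" using pos h d lt by auto
        then show ?thesis using \<open>ln (\<phi> d1) + ln (\<phi> d2) \<le> _\<close> p1 by (simp add: ln_mult)
      qed
      then have "\<phi> d1 * \<phi> d2 \<le> \<phi> a * \<phi> b"
      proof -
        have "0 < \<phi> a" "0 < \<phi> b" "0 < \<phi> d2" using pos h d lt by auto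
        then show ?thesis using \<open>ln (\<phi> d1 * \<phi> d2) \<le> _\<close> p1 by (subst (asm) ln_le_cancel_iff) auto
      qed
      moreover have "d1 \<in> {0..1}" "d2 \<in> {0..1}" using d h by auto
      ultimately show ?thesis using ab01 unfolding ft_def by auto
    qed
  qed
qed





lemma pt_even[simp]: "pt (2 * k) = XP (Suc k)" unfolding pt_def by simp
lemma pt_odd[simp]: "pt (Suc (2 * k)) = YP (Suc k)" unfolding pt_def by simp

definition KK :: "(nat \<Rightarrow> real \<Rightarrow> real) \<Rightarrow> (nat \<Rightarrow> real \<Rightarrow> real) \<Rightarrow> nat \<Rightarrow> real \<Rightarrow> real \<Rightarrow> real" where
  "KK f g j u v = (if even j then ft (f (j div 2 + 1)) (v - u) else ft (g (j div 2 + 1)) (u - v))"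

definition W1 :: "nat \<Rightarrow> real \<Rightarrow> real" where "W1 j v = indicator {0..1} v"

definition Wt :: "nat \<Rightarrow> real \<Rightarrow> nat \<Rightarrow> real \<Rightarrow> real" where
  "Wt js t j v = indicator {0..1} v * (if j = js then indicator {..t} v else 1)"

lemma lc_ineq2:
  assumes adm: "sw_admissible \<phi>" and lc: "sw_logconcave \<phi>"
    and h: "d1 \<le> a" "a \<le> d2" "d1 \<le> b" "b \<le> d2" "a + b = d1 + d2"
  shows "ft \<phi> d1 * ft \<phi> d2 \<le> ft \<phi> a * ft \<phi> b"
proof (cases "a \<le> b")
  case True then show ?thesis using lc_ineq[OF adm lc] h by auto
next
  case False then show ?thesis using lc_ineq[OF adm lc, of d1 b a d2] h by (auto simp: mult.commute)
qed

lemma KK_tp2: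
  assumes "sw_admissible (f (j div 2 + 1))" "sw_logconcave (f (j div 2 + 1))"
    "sw_admissible (g (j div 2 + 1))" "sw_logconcave (g (j div 2 + 1))"
    and "u \<le> w" "v \<le> v'"
  shows "KK f g j u v' * KK f g j w v \<le> KK f g j u v * KK f g j w v'"
proof (cases "even j")
  case True
  have "ft (f (j div 2 + 1)) (v - w) * ft (f (j div 2 + 1)) (v' - u) \<le> ft (f (j div 2 + 1)) (v - u) * ft (f (j div 2 + 1)) (v' - w)"
    using assms by (intro lc_ineq2) auto
  then show ?thesis using True unfolding KK_def by (simp add: mult.commute)
next
  case False
  have "ft (g (j div 2 + 1)) (u - v') * ft (g (j div 2 + 1)) (w - v) \<le> ft (g (j div 2 + 1)) (u - v) * ft (g (j div 2 + 1)) (w - v')"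
    using assms by (intro lc_ineq2) auto
  then show ?thesis using False unfolding KK_def by (simp add: mult.commute)
qed

lemma ft_meas:
  assumes "sw_admissible \<phi>"
  shows "ft \<phi> \<in> borel_measurable borel"
proof -
  obtain \<phi>' where "\<And>x. x \<in> {0..1} \<Longrightarrow> (\<phi> has_real_derivative \<phi>' x) (at x within {0..1})"
    using assms unfolding sw_admissible_def by blast
  then have c: "continuous_on {0..1} \<phi>" by (rule DERIV_continuous_on)
  have "ft \<phi> = (\<lambda>x. indicator {0..1} x *\<^sub>R \<phi> x)" unfolding ft_def by (auto simp: indicator_def)
  then show ?thesis using borel_measurable_continuous_on_indicator[OF _ c] by simp
qed

lemma KK_meas:
  assumes "sw_admissible (f (j div 2 + 1))" "sw_admissible (g (j div 2 + 1))"
  shows "case_prod (KK f g j) \<in> borel_measurable (lborel \<Otimes>\<^sub>M lborel)"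
proof -
  have [measurable]: "ft (f (j div 2 + 1)) \<in> borel_measurable borel" "ft (g (j div 2 + 1)) \<in> borel_measurable borel"
    using assms by (auto intro: ft_meas)
  show ?thesis unfolding KK_def by measurable
qed

lemma KK_nn: "sw_admissible (f (j div 2 + 1)) \<Longrightarrow> sw_admissible (g (j div 2 + 1)) \<Longrightarrow> 0 \<le> KK f g j u v"
  unfolding KK_def by (auto intro: ft_nn)


lemma conv_idx:
  assumes "convex_sawtooth f g n" "j < 2 * n"
  shows "sw_admissible (f (j div 2 + 1)) \<and> sw_admissible (g (j div 2 + 1)) \<and>
         sw_logconcave (f (j div 2 + 1)) \<and> sw_logconcave (g (j div 2 + 1))"
proof -
  have "j div 2 + 1 \<in> {1..n}" using assms(2) by auto
  then show ?thesis using assms(1) unfolding convex_sawtooth_def by blast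
qed

lemma W1_meas: "W1 j \<in> borel_measurable lborel" unfolding W1_def by measurable
lemma Wt_meas: "Wt js t j \<in> borel_measurable lborel"
  unfolding Wt_def by (cases "j = js") (simp_all, measurable)

lemma chainm_gen:
  assumes "convex_sawtooth f g n" "N \<le> 2 * n"
    and "\<And>j. W j \<in> borel_measurable lborel" "\<And>j x. 0 \<le> W j x"
  shows "chainm W (KK f g) N"
proof
  fix j assume "j < N"
  then have "sw_admissible (f (j div 2 + 1)) \<and> sw_admissible (g (j div 2 + 1))"
    using conv_idx[OF assms(1), of j] assms(2) by auto
  then show "case_prod (KK f g j) \<in> borel_measurable (lborel \<Otimes>\<^sub>M lborel)" "\<And>x y. 0 \<le> KK f g j x y"
    by (auto intro: KK_meas KK_nn)
qed (use assms in auto)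

lemma chainm_W1: "convex_sawtooth f g n \<Longrightarrow> N \<le> 2 * n \<Longrightarrow> chainm W1 (KK f g) N"
  by (rule chainm_gen) (use W1_meas in \<open>auto simp: W1_def\<close>)

lemma chainm_Wt: "convex_sawtooth f g n \<Longrightarrow> N \<le> 2 * n \<Longrightarrow> chainm (Wt js t) (KK f g) N"
  by (rule chainm_gen) (use Wt_meas in \<open>auto simp: Wt_def\<close>)

lemma sw_parts_pt: "sw_parts m h = pt ` {0..2 * m + (if h then 1 else 0)}"
proof (intro equalityI subsetI)
  fix p assume "p \<in> sw_parts m h"
  then consider (x) i where "p = XP i" "1 \<le> i" "i \<le> m + 1" | (y) i where "p = YP i" "1 \<le> i" "i \<le> m"
    | (e) "h" "p = YP (m + 1)"
    unfolding sw_parts_def by (auto split: if_splits)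
  then show "p \<in> pt ` {0..2 * m + (if h then 1 else 0)}"
  proof cases
    case x
    then have "p = pt (2 * (i - 1))" using pt_even[of "i - 1"] by simp
    then show ?thesis using x by (intro rev_image_eqI[of "2 * (i - 1)"]) auto
  next
    case y
    then have "p = pt (Suc (2 * (i - 1)))" using pt_odd[of "i - 1"] by simp
    then show ?thesis using y by (intro rev_image_eqI[of "Suc (2 * (i - 1))"]) auto
  next
    case e
    then have "p = pt (Suc (2 * m))" by simp
    then show ?thesis using e by (intro rev_image_eqI[of "Suc (2 * m)"]) auto
  qed
next
  fix p assume "p \<in> pt ` {0..2 * m + (if h then 1 else 0)}"
  then obtain j where j: "p = pt j" "j \<le> 2 * m + (if h then 1 else 0)" by auto
  show "p \<in> sw_parts m h"
  proof (cases "even j")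
    case True
    then obtain k where "j = 2 * k" by (auto elim: evenE)
    then show ?thesis using j unfolding sw_parts_def by (auto split: if_splits)
  next
    case False
    then obtain k where k: "j = Suc (2 * k)" by (auto elim: oddE)
    show ?thesis
    proof (cases "k < m")
      case True then show ?thesis using j k unfolding sw_parts_def by auto
    next
      case False then have "h" "k = m" using j k by (auto split: if_splits)
      then show ?thesis using j k unfolding sw_parts_def by auto
    qed
  qed
qed

lemma prod_pairs:
  fixes F :: "nat \<Rightarrow> real"
  shows "(\<Prod>j<2 * m. F j) = (\<Prod>i\<in>{1..m}. F (2 * (i - 1)) * F (Suc (2 * (i - 1))))"
proof (induction m)
  case 0 then show ?case by simp
next
  case (Suc m)
  have "(\<Prod>j<2 * Suc m. F j) = (\<Prod>j<2 * m. F j) * F (2 * m) * F (Suc (2 * m))"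
    by (simp add: mult_ac)
  also have "\<dots> = (\<Prod>i\<in>{1..Suc m}. F (2 * (i - 1)) * F (Suc (2 * (i - 1))))"
    using Suc by (simp add: prod.cl_ivl_Suc mult_ac)
  finally show ?case .
qed

lemma sw_dens_chd:
  "sw_dens f g m h z = chd W1 (KK f g) (2 * m + (if h then 1 else 0)) z"
proof -
  let ?N = "2 * m + (if h then 1 else 0)"
  have P: "(\<Prod>p\<in>sw_parts m h. indicator {0..1} (z p)) = (\<Prod>j\<in>{0..?N}. W1 j (z (pt j)))"
    unfolding sw_parts_pt W1_def by (subst prod.reindex) (auto intro: inj_on_subset[OF inj_pt])
  show ?thesis
  proof (cases "\<forall>j\<le>?N. z (pt j) \<in> {0..1}")
    case False
    then obtain j where j: "j \<le> ?N" "z (pt j) \<notin> {0..1}" by auto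
    then have "(\<Prod>j\<in>{0..?N}. W1 j (z (pt j))) = 0"
      by (intro prod_zero bexI[of _ j]) (auto simp: W1_def)
    then show ?thesis unfolding sw_dens_def chd_def P by simp
  next
    case True
    have Q: "(\<Prod>i\<in>{1..m}. (if z (XP i) \<le> z (YP i) \<and> z (XP (i+1)) \<le> z (YP i)
                      then f i (z (YP i) - z (XP i)) * g i (z (YP i) - z (XP (i+1))) else 0))
           = (\<Prod>j<2 * m. KK f g j (z (pt j)) (z (pt (Suc j))))"
      unfolding prod_pairs
    proof (intro prod.cong refl)
      fix i assume i: "i \<in> {1..m}"
      have e: "pt (2 * (i - 1)) = XP i" "pt (Suc (2 * (i - 1))) = YP i" "pt (Suc (Suc (2 * (i - 1)))) = XP (i + 1)"
        "2 * (i - 1) div 2 + 1 = i" "Suc (2 * (i - 1)) div 2 + 1 = i" "even (2 * (i - 1))" "\<not> even (Suc (2 * (i - 1)))"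
      proof -
        have "Suc (Suc (2 * (i - 1))) = 2 * i" using i by auto
        then show "pt (2 * (i - 1)) = XP i" "pt (Suc (2 * (i - 1))) = YP i" "pt (Suc (Suc (2 * (i - 1)))) = XP (i + 1)"
          "2 * (i - 1) div 2 + 1 = i" "Suc (2 * (i - 1)) div 2 + 1 = i" "even (2 * (i - 1))" "\<not> even (Suc (2 * (i - 1)))"
          using i pt_even[of "i - 1"] pt_odd[of "i - 1"] pt_even[of i] by (auto simp del: pt_even pt_odd)
      qed
      have b: "z (XP i) \<in> {0..1}" "z (YP i) \<in> {0..1}" "z (XP (i + 1)) \<in> {0..1}"
        using True[rule_format, of "2 * (i - 1)"] True[rule_format, of "Suc (2 * (i - 1))"]
          True[rule_format, of "Suc (Suc (2 * (i - 1)))"] i e by auto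
      show "(if z (XP i) \<le> z (YP i) \<and> z (XP (i+1)) \<le> z (YP i)
                      then f i (z (YP i) - z (XP i)) * g i (z (YP i) - z (XP (i+1))) else 0)
          = KK f g (2 * (i - 1)) (z (pt (2 * (i - 1)))) (z (pt (Suc (2 * (i - 1))))) *
            KK f g (Suc (2 * (i - 1))) (z (pt (Suc (2 * (i - 1))))) (z (pt (Suc (Suc (2 * (i - 1))))))"
        unfolding KK_def ft_def e(1-3) using b e(4-7) by auto
    qed
    show ?thesis
    proof (cases h)
      case False
      then show ?thesis unfolding sw_dens_def chd_def P Q by simp
    next
      case h: True
      have b: "z (XP (m+1)) \<in> {0..1}" "z (YP (m+1)) \<in> {0..1}"
        using True[rule_format, of "2 * m"] True[rule_format, of "Suc (2 * m)"] h by auto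
      have "(\<Prod>j<?N. KK f g j (z (pt j)) (z (pt (Suc j)))) = (\<Prod>j<2 * m. KK f g j (z (pt j)) (z (pt (Suc j)))) * KK f g (2 * m) (z (XP (m+1))) (z (YP (m+1)))"
        using h by simp
      moreover have "KK f g (2 * m) (z (XP (m+1))) (z (YP (m+1))) = (if z (XP (m+1)) \<le> z (YP (m+1)) then f (m+1) (z (YP (m+1)) - z (XP (m+1))) else 0)"
        using b unfolding KK_def ft_def by auto
      ultimately have R: "(\<Prod>j<?N. KK f g j (z (pt j)) (z (pt (Suc j)))) = (\<Prod>j<2 * m. KK f g j (z (pt j)) (z (pt (Suc j)))) * (if z (XP (m+1)) \<le> z (YP (m+1)) then f (m+1) (z (YP (m+1)) - z (XP (m+1))) else 0)"
        by simp
      show ?thesis unfolding sw_dens_def chd_def P Q R using h by (simp only: if_True mult.assoc)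
    qed
  qed
qed


lemma bwd_cong: "d \<le> N \<Longrightarrow> (\<And>j u. N - d < j \<Longrightarrow> W j u = W' j u) \<Longrightarrow> bwd W K N d v = bwd W' K N d v"
proof (induction d arbitrary: v)
  case (Suc d)
  have "bwd W K N d w = bwd W' K N d w" for w using Suc.prems by (intro Suc.IH) auto
  moreover have "W (N - d) w = W' (N - d) w" for w
    using Suc.prems by auto
  ultimately show ?case by simp
qed simp

lemma RP_mult: assumes "RP A B" shows "RP (\<lambda>v. A v * w v) (\<lambda>v. B v * w v)"
  unfolding RP_def
proof (intro allI impI)
  fix x y :: real assume "x \<le> y"
  then have "A y * B x \<le> A x * B y" using assms unfolding RP_def by auto
  then have "(A y * B x) * (w x * w y) \<le> (A x * B y) * (w x * w y)" by (rule mult_right_mono) simp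
  then show "A y * w y * (B x * w x) \<le> A x * w x * (B y * w y)" by (simp add: mult_ac)
qed

lemma RP_base: "RP (\<lambda>v. h v * ennreal (Wt js t js v)) (\<lambda>v. h v * ennreal (W1 js v))"
  unfolding RP_def
proof (intro allI impI)
  fix u v :: real assume uv: "u \<le> v"
  show "h v * ennreal (Wt js t js v) * (h u * ennreal (W1 js u)) \<le> h u * ennreal (Wt js t js u) * (h v * ennreal (W1 js v))"
  proof (cases "v \<le> t")
    case True
    then have "Wt js t js v = W1 js v" "Wt js t js u = W1 js u" using uv unfolding Wt_def W1_def by auto
    then show ?thesis by (simp add: mult_ac)
  next
    case False
    then have "Wt js t js v = 0" unfolding Wt_def by simp
    then show ?thesis by simp
  qed
qed

lemma cheb_inc:
  fixes A B :: "real \<Rightarrow> ennreal" and p :: "real \<Rightarrow> ennreal"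
  assumes [measurable]: "A \<in> borel_measurable lborel" "B \<in> borel_measurable lborel" "p \<in> borel_measurable lborel"
    and RP: "RP A B"
    and supp: "\<And>u. u \<notin> {0..1} \<Longrightarrow> A u = 0 \<and> B u = 0"
    and mono: "\<And>u w. 0 \<le> u \<Longrightarrow> u < w \<Longrightarrow> w \<le> 1 \<Longrightarrow> p u \<le> p w"
  shows "(\<integral>\<^sup>+u. p u * A u \<partial>lborel) * (\<integral>\<^sup>+u. B u \<partial>lborel) \<le> (\<integral>\<^sup>+u. A u \<partial>lborel) * (\<integral>\<^sup>+u. p u * B u \<partial>lborel)"
proof -
  have "(\<integral>\<^sup>+u. p u * A u \<partial>lborel) * (\<integral>\<^sup>+u. B u \<partial>lborel) = (\<integral>\<^sup>+u. \<integral>\<^sup>+w. (p u * A u) * B w \<partial>lborel \<partial>lborel)"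
    by (rule prod_int) measurable
  also have "\<dots> \<le> (\<integral>\<^sup>+u. \<integral>\<^sup>+w. A u * (p w * B w) \<partial>lborel \<partial>lborel)"
  proof (rule swap_le)
    fix u w :: real assume uw: "u < w"
    let ?x = "A u * B w" and ?y = "A w * B u"
    show "p u * A u * B w + p w * A w * B u \<le> A u * (p w * B w) + A w * (p u * B u)"
    proof (cases "u \<in> {0..1} \<and> w \<in> {0..1}")
      case True
      have "?y \<le> ?x" using RP uw unfolding RP_def by auto
      moreover have "p u \<le> p w" using True uw by (intro mono) auto
      ultimately have "?x * p u + ?y * p w \<le> ?x * p w + ?y * p u" by (rule ennr_cross)
      then show ?thesis by (simp add: mult_ac)
    next
      case False
      then have "(A u = 0 \<and> B u = 0) \<or> (A w = 0 \<and> B w = 0)" using supp by blast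
      then show ?thesis by auto
    qed
  qed measurable
  also have "\<dots> = (\<integral>\<^sup>+u. A u \<partial>lborel) * (\<integral>\<^sup>+u. p u * B u \<partial>lborel)"
    by (rule prod_int[symmetric]) measurable
  finally show ?thesis .
qed



lemma ratio_le:
  fixes a b c d :: ennreal
  assumes "a * d \<le> c * b" "a \<le> b" "c \<le> d" "0 < enn2real d"
  shows "enn2real a / enn2real b \<le> enn2real c / enn2real d"
proof (cases "b = top \<or> enn2real b = 0")
  case True
  then have "enn2real b = 0" by auto
  then show ?thesis by simp
next
  case False
  then have bt: "b \<noteq> top" and bp: "0 < enn2real b" by (auto simp: less_le)
  have dt: "d \<noteq> top" using assms(4) by auto
  have at: "a \<noteq> top" using assms(2) bt by (auto simp: top_unique)
  have ct: "c \<noteq> top" using assms(3) dt by (auto simp: top_unique)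
  define ar br cr dr where "ar = enn2real a" "br = enn2real b" "cr = enn2real c" "dr = enn2real d"
  have e: "a = ennreal ar" "b = ennreal br" "c = ennreal cr" "d = ennreal dr"
    using at bt ct dt unfolding ar_br_cr_dr_def by (simp_all add: ennreal_enn2real_if)
  have nn: "0 \<le> ar" "0 \<le> br" "0 \<le> cr" "0 \<le> dr" unfolding ar_br_cr_dr_def by simp_all
  have "ennreal (ar * dr) \<le> ennreal (cr * br)"
    using assms(1) nn unfolding e by (simp add: ennreal_mult)
  then have le: "ar * dr \<le> cr * br" using nn by (simp add: ennreal_le_iff)
  have bp': "0 < br" "0 < dr" using bp assms(4) unfolding ar_br_cr_dr_def by auto
  have "ar / br = (ar * dr) / (br * dr)" using bp' by simp
  also have "\<dots> \<le> (cr * br) / (br * dr)"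
    using le bp' by (intro divide_right_mono) auto
  also have "\<dots> = cr / dr" using bp' by simp
  finally show ?thesis unfolding ar_br_cr_dr_def .
qed


lemma RP_chain:
  assumes conv: "convex_sawtooth f g n" and NN: "N \<le> 2 * n" and jc: "js \<le> c" and cN: "c \<le> N"
  shows "RP (\<lambda>v. fwp (Wt js t) (KK f g) c v * ennreal (Wt js t c v)) (\<lambda>v. fwp W1 (KK f g) c v * ennreal (W1 c v))"
  using jc cN
proof (induction c rule: dec_induct)
  case base
  have "fwp (Wt js t) (KK f g) js v = fwp W1 (KK f g) js v" for v
    by (rule fwp_cong) (auto simp: Wt_def W1_def)
  then show ?case using RP_base[of "fwp W1 (KK f g) js" js t] by simp
next
  case (step k)
  interpret Ct: chainm "Wt js t" "KK f g" N by (rule chainm_Wt[OF conv NN])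
  interpret C1: chainm W1 "KK f g" N by (rule chainm_W1[OF conv NN])
  have kN: "k < N" using step by auto
  have IH: "RP (\<lambda>v. fwp (Wt js t) (KK f g) k v * ennreal (Wt js t k v)) (\<lambda>v. fwp W1 (KK f g) k v * ennreal (W1 k v))"
    using step by auto
  have ci: "sw_admissible (f (k div 2 + 1)) \<and> sw_admissible (g (k div 2 + 1)) \<and>
         sw_logconcave (f (k div 2 + 1)) \<and> sw_logconcave (g (k div 2 + 1))"
    using conv_idx[OF conv, of k] kN NN by auto
  have [measurable]: "fwp (Wt js t) (KK f g) k \<in> borel_measurable lborel" "fwp W1 (KK f g) k \<in> borel_measurable lborel"
    using kN by (auto intro!: Ct.fwp_meas C1.fwp_meas)
  have [measurable]: "Wt js t k \<in> borel_measurable lborel" "W1 k \<in> borel_measurable lborel"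
    by (rule Wt_meas, rule W1_meas)
  have [measurable]: "case_prod (KK f g k) \<in> borel_measurable (lborel \<Otimes>\<^sub>M lborel)"
    using ci by (intro KK_meas) auto
  have RP1: "RP (\<lambda>v. \<integral>\<^sup>+u. ennreal (KK f g k u v) * (ennreal (Wt js t k u) * fwp (Wt js t) (KK f g) k u) \<partial>lborel)
                (\<lambda>v. \<integral>\<^sup>+u. ennreal (KK f g k u v) * (ennreal (W1 k u) * fwp W1 (KK f g) k u) \<partial>lborel)"
  proof (rule tp2_step)
    show "RP (\<lambda>u. ennreal (Wt js t k u) * fwp (Wt js t) (KK f g) k u) (\<lambda>u. ennreal (W1 k u) * fwp W1 (KK f g) k u)"
      using IH by (simp add: mult.commute)
    show "\<And>u v. 0 \<le> KK f g k u v" using ci by (intro KK_nn) auto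
    show "\<And>u w v v'. u \<le> w \<Longrightarrow> v \<le> v' \<Longrightarrow> KK f g k u v' * KK f g k w v \<le> KK f g k u v * KK f g k w v'"
      using ci by (intro KK_tp2) auto
  qed measurable
  have "Wt js t (Suc k) = W1 (Suc k)" using step by (auto simp: Wt_def W1_def fun_eq_iff)
  then show ?case using RP_mult[OF RP1, of "\<lambda>v. ennreal (W1 (Suc k) v)"] by simp
qed


context chainm
begin

lemma chd_meas: "pt ` {0..N} \<subseteq> I \<Longrightarrow> (\<lambda>z. chd W K N z) \<in> borel_measurable (PiM I (\<lambda>_. lborel))"
proof -
  assume a: "pt ` {0..N} \<subseteq> I"
  have "pt ` {..N} \<subseteq> I" using a by (simp add: atLeast0AtMost)
  then have m1: "(\<lambda>z. Lft W K N z) \<in> borel_measurable (PiM I (\<lambda>_. lborel))" by (intro Lft_meas) auto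
  have "pt N \<in> pt ` {0..N}" by simp
  then have "pt N \<in> I" using a by blast
  then have cp: "(\<lambda>z. z (pt N)) \<in> measurable (PiM I (\<lambda>_. lborel)) lborel"
    by (rule measurable_component_singleton)
  have c1: "(\<lambda>z. W N (z (pt N))) \<in> borel_measurable (PiM I (\<lambda>_. lborel))"
    by (rule measurable_compose[OF cp]) (intro Wm, simp)
  show ?thesis unfolding chd_Lft by (intro borel_measurable_times c1 m1)
qed

lemma cond_int_real:
  assumes "c \<le> N"
  shows "(\<integral>z. chd W K N (z(pt c := v)) \<partial>PiM (pt ` {0..N} - {pt c}) (\<lambda>_. lborel))
    = enn2real (fwp W K c v * ennreal (W c v) * bwd W K N (N - c) v)"
proof -
  have "(\<integral>z. chd W K N (z(pt c := v)) \<partial>PiM (pt ` {0..N} - {pt c}) (\<lambda>_. lborel))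
     = enn2real (\<integral>\<^sup>+z. ennreal (chd W K N (z(pt c := v))) \<partial>PiM (pt ` {0..N} - {pt c}) (\<lambda>_. lborel))"
    by (rule integral_eq_nn_integral) (auto intro!: chd_upd_meas chd_nn)
  then show ?thesis using cond_int[OF assms] by simp
qed

lemma full_int_real:
  "(\<integral>z. chd W K N z \<partial>PiM (pt ` {0..N}) (\<lambda>_. lborel))
    = enn2real (\<integral>\<^sup>+v. fwp W K N v * ennreal (W N v) \<partial>lborel)"
proof -
  have "(\<integral>z. chd W K N z \<partial>PiM (pt ` {0..N}) (\<lambda>_. lborel))
     = enn2real (\<integral>\<^sup>+z. ennreal (chd W K N z) \<partial>PiM (pt ` {0..N}) (\<lambda>_. lborel))"
    by (rule integral_eq_nn_integral) (auto intro!: chd_meas chd_nn)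
  then show ?thesis using full_int by simp
qed

end

lemma chd_Wt:
  assumes "js \<le> N"
  shows "indicator {..t} (z (pt js)) * chd W1 K N z = chd (Wt js t) K N z"
proof -
  have "(\<Prod>j\<in>{0..N}. Wt js t j (z (pt j))) = (\<Prod>j\<in>{0..N}. W1 j (z (pt j)) * (if j = js then indicator {..t} (z (pt js)) else 1))"
    unfolding Wt_def W1_def by (intro prod.cong) auto
  also have "\<dots> = (\<Prod>j\<in>{0..N}. W1 j (z (pt j))) * indicator {..t} (z (pt js))"
    using assms by (simp add: prod.distrib)
  finally show ?thesis unfolding chd_def by (simp add: mult_ac)
qed


lemma marg_eq:
  assumes conv: "convex_sawtooth f g n" and c: "c \<le> 2 * n"
  shows "sw_marg f g n False (pt c) v = enn2real (fwp W1 (KK f g) c v * ennreal (W1 c v) * bwd W1 (KK f g) (2 * n) (2 * n - c) v)"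
proof -
  interpret C1: chainm W1 "KK f g" "2 * n" by (rule chainm_W1[OF conv]) simp
  show ?thesis unfolding sw_marg_def sw_parts_pt sw_dens_chd using C1.cond_int_real[OF c] by simp
qed

lemma cond_eq:
  assumes conv: "convex_sawtooth f g n" and c: "c \<le> 2 * n" and js: "js \<le> 2 * n"
  shows "sw_cond_cdf f g n False (pt js) (pt c) v t =
     enn2real (fwp (Wt js t) (KK f g) c v * ennreal (Wt js t c v) * bwd (Wt js t) (KK f g) (2 * n) (2 * n - c) v) /
     enn2real (fwp W1 (KK f g) c v * ennreal (W1 c v) * bwd W1 (KK f g) (2 * n) (2 * n - c) v)"
proof -
  interpret Ct: chainm "Wt js t" "KK f g" "2 * n" by (rule chainm_Wt[OF conv]) simp
  have "(\<integral>z. indicator {..t} ((z(pt c := v)) (pt js)) * sw_dens f g n False (z(pt c := v))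
        \<partial>(PiM (sw_parts n False - {pt c}) (\<lambda>_. lborel)))
      = (\<integral>z. chd (Wt js t) (KK f g) (2 * n) (z(pt c := v)) \<partial>PiM (pt ` {0..2 * n} - {pt c}) (\<lambda>_. lborel))"
    unfolding sw_parts_pt sw_dens_chd if_False add_0_right chd_Wt[OF js] ..
  also have "\<dots> = enn2real (fwp (Wt js t) (KK f g) c v * ennreal (Wt js t c v) * bwd (Wt js t) (KK f g) (2 * n) (2 * n - c) v)"
    by (rule Ct.cond_int_real[OF c])
  finally show ?thesis unfolding sw_cond_cdf_def marg_eq[OF conv c] by simp
qed

lemma cdf_eq:
  assumes conv: "convex_sawtooth f g n" and NN: "2 * m + (if h then 1 else 0) \<le> 2 * n"
    and js: "js \<le> 2 * m + (if h then 1 else 0)"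
  shows "sw_cdf f g m h (pt js) t =
     enn2real (\<integral>\<^sup>+v. fwp (Wt js t) (KK f g) (2 * m + (if h then 1 else 0)) v * ennreal (Wt js t (2 * m + (if h then 1 else 0)) v) \<partial>lborel) /
     enn2real (\<integral>\<^sup>+v. fwp W1 (KK f g) (2 * m + (if h then 1 else 0)) v * ennreal (W1 (2 * m + (if h then 1 else 0)) v) \<partial>lborel)"
proof -
  let ?N = "2 * m + (if h then 1 else 0)"
  interpret Ct: chainm "Wt js t" "KK f g" ?N by (rule chainm_Wt[OF conv NN])
  interpret C1: chainm W1 "KK f g" ?N by (rule chainm_W1[OF conv NN])
  have 1: "(\<integral>z. indicator {..t} (z (pt js)) * sw_dens f g m h z \<partial>(PiM (sw_parts m h) (\<lambda>_. lborel)))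
      = (\<integral>z. chd (Wt js t) (KK f g) ?N z \<partial>PiM (pt ` {0..?N}) (\<lambda>_. lborel))"
    unfolding sw_parts_pt sw_dens_chd chd_Wt[OF js] ..
  have 2: "sw_mass f g m h = (\<integral>z. chd W1 (KK f g) ?N z \<partial>PiM (pt ` {0..?N}) (\<lambda>_. lborel))"
    unfolding sw_mass_def sw_parts_pt sw_dens_chd ..
  show ?thesis unfolding sw_cdf_def 1 2 Ct.full_int_real C1.full_int_real ..
qed


lemma Wt_le: "Wt js t j u \<le> W1 j u"
  unfolding Wt_def W1_def by (auto simp: indicator_def)

lemma Wt_eq: "j \<noteq> js \<Longrightarrow> Wt js t j = W1 j"
  unfolding Wt_def W1_def by (auto simp: fun_eq_iff)

lemma claim12:
  assumes conv: "convex_sawtooth f g n" and jc: "js \<le> c" and c: "c \<le> 2 * n" and v: "v1 \<le> v2"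
    and p1: "0 < sw_marg f g n False (pt c) v1" and p2: "0 < sw_marg f g n False (pt c) v2"
  shows "sw_cond_cdf f g n False (pt js) (pt c) v2 t \<le> sw_cond_cdf f g n False (pt js) (pt c) v1 t"
proof -
  define A where "A v = fwp (Wt js t) (KK f g) c v * ennreal (Wt js t c v)" for v
  define B where "B v = fwp W1 (KK f g) c v * ennreal (W1 c v)" for v
  define bw where "bw v = bwd W1 (KK f g) (2 * n) (2 * n - c) v" for v
  have bweq: "bwd (Wt js t) (KK f g) (2 * n) (2 * n - c) v = bw v" for v
    unfolding bw_def using jc c by (intro bwd_cong) (auto simp: Wt_eq)
  have ce: "sw_cond_cdf f g n False (pt js) (pt c) v t = enn2real (A v * bw v) / enn2real (B v * bw v)" for v
    unfolding cond_eq[OF conv c order.trans[OF jc c]] A_def B_def bweq bw_def ..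
  have me: "sw_marg f g n False (pt c) v = enn2real (B v * bw v)" for v
    unfolding marg_eq[OF conv c] B_def bw_def ..
  have RP: "RP A B" unfolding A_def B_def by (rule RP_chain[OF conv order.refl jc c])
  have AB: "A v \<le> B v" for v
    unfolding A_def B_def by (intro mult_mono fwp_mono ennreal_leI Wt_le) auto
  have "A v2 * B v1 \<le> A v1 * B v2" using RP v unfolding RP_def by auto
  then have "(A v2 * B v1) * (bw v1 * bw v2) \<le> (A v1 * B v2) * (bw v1 * bw v2)" by (rule mult_right_mono) simp
  then have "(A v2 * bw v2) * (B v1 * bw v1) \<le> (A v1 * bw v1) * (B v2 * bw v2)" by (simp add: mult_ac)
  then have "enn2real (A v2 * bw v2) / enn2real (B v2 * bw v2) \<le> enn2real (A v1 * bw v1) / enn2real (B v1 * bw v1)"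
    by (rule ratio_le) (use AB p1 me in \<open>auto intro: mult_right_mono\<close>)
  then show ?thesis unfolding ce .
qed


lemma ft_anti:
  assumes "sw_admissible \<phi>" "0 \<le> u" "u \<le> w" "y \<le> 1"
  shows "ft \<phi> (y - w) \<le> ft \<phi> (y - u)"
proof (cases "y - w \<in> {0..1}")
  case True
  then have "y - u \<in> {0..1}" using assms by auto
  moreover have "\<phi> (y - w) \<le> \<phi> (y - u)" using assms(1) True \<open>y - u \<in> _\<close> assms(3)
    unfolding sw_admissible_def monotone_on_def by auto
  ultimately show ?thesis using True unfolding ft_def by auto
next
  case False
  then have "ft \<phi> (y - w) = 0" unfolding ft_def by (rule if_not_P)
  then show ?thesis using ft_nn[OF assms(1)] by simp
qed

lemma ft_mono:
  assumes "sw_admissible \<phi>" "u \<le> w" "w \<le> 1" "0 \<le> x"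
  shows "ft \<phi> (u - x) \<le> ft \<phi> (w - x)"
proof (cases "u - x \<in> {0..1}")
  case True
  then have "w - x \<in> {0..1}" using assms by auto
  moreover have "\<phi> (u - x) \<le> \<phi> (w - x)" using assms(1) True \<open>w - x \<in> _\<close> assms(2)
    unfolding sw_admissible_def monotone_on_def by auto
  ultimately show ?thesis using True unfolding ft_def by auto
next
  case False
  then have "ft \<phi> (u - x) = 0" unfolding ft_def by (rule if_not_P)
  then show ?thesis using ft_nn[OF assms(1)] by simp
qed

lemma tail3:
  fixes IA IB IpA IpB w :: ennreal
  assumes cheb: "IA * IpB \<le> IpA * IB" and "IA \<le> IB" "IpA \<le> IpB" "0 < enn2real (IpB * w)"
  shows "enn2real IA / enn2real IB \<le> enn2real (IpA * w) / enn2real (IpB * w)"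
proof (rule ratio_le)
  show "IA * (IpB * w) \<le> IpA * w * IB"
    using mult_right_mono[OF cheb, of w] by (simp add: ac_simps)
  show "IpA * w \<le> IpB * w" using assms(3) by (rule mult_right_mono) simp
qed (use assms in auto)

lemma tail4:
  fixes IA IB IpA IpB w :: ennreal
  assumes cheb: "IpA * IB \<le> IA * IpB" and "IA \<le> IB" "IpA \<le> IpB" "0 < enn2real IB"
  shows "enn2real (IpA * w) / enn2real (IpB * w) \<le> enn2real IA / enn2real IB"
proof (rule ratio_le)
  show "IpA * w * IB \<le> IA * (IpB * w)"
    using mult_right_mono[OF cheb, of w] by (simp add: ac_simps)
  show "IpA * w \<le> IpB * w" using assms(3) by (rule mult_right_mono) simp
qed (use assms in auto)

lemma claim3:
  assumes conv: "convex_sawtooth f g n" and r: "1 \<le> r" "r \<le> n" and js: "js \<le> 2 * (r - 1)"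
    and y: "y \<in> {0..1}" and p: "0 < sw_marg f g n False (pt (Suc (2 * (r - 1)))) y"
  shows "sw_cdf f g (r - 1) False (pt js) t \<le> sw_cond_cdf f g n False (pt js) (pt (Suc (2 * (r - 1)))) y t"
proof -
  define c' where "c' = 2 * (r - 1)"
  define c where "c = Suc c'"
  have cN: "c \<le> 2 * n" "c' \<le> 2 * n" "c' < 2 * n" using r unfolding c_def c'_def by auto
  interpret Ct: chainm "Wt js t" "KK f g" "2 * n" by (rule chainm_Wt[OF conv]) simp
  interpret C1: chainm W1 "KK f g" "2 * n" by (rule chainm_W1[OF conv]) simp
  have ci: "sw_admissible (f (c' div 2 + 1)) \<and> sw_admissible (g (c' div 2 + 1))"
    using conv_idx[OF conv cN(3)] by auto
  define A where "A v = fwp (Wt js t) (KK f g) c' v * ennreal (Wt js t c' v)" for v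
  define B where "B v = fwp W1 (KK f g) c' v * ennreal (W1 c' v)" for v
  define bw where "bw v = bwd W1 (KK f g) (2 * n) (2 * n - c) v" for v
  define p where "p u = ennreal (KK f g c' u y)" for u
  have jc: "c \<noteq> js" "js < c" using js unfolding c_def c'_def by auto
  have bweq: "bwd (Wt js t) (KK f g) (2 * n) (2 * n - c) v = bw v" for v
    unfolding bw_def using jc cN by (intro bwd_cong) (auto simp: Wt_eq)
  have fwA: "fwp (Wt js t) (KK f g) c y = (\<integral>\<^sup>+u. p u * A u \<partial>lborel)"
    unfolding c_def p_def A_def by (simp add: mult_ac)
  have fwB: "fwp W1 (KK f g) c y = (\<integral>\<^sup>+u. p u * B u \<partial>lborel)"
    unfolding c_def p_def B_def by (simp add: mult_ac)
  have cdfe: "sw_cdf f g (r - 1) False (pt js) t = enn2real (\<integral>\<^sup>+u. A u \<partial>lborel) / enn2real (\<integral>\<^sup>+u. B u \<partial>lborel)"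
  proof -
    have e: "2 * (r - 1) + (if False then 1 else 0) = c'" by (simp add: c'_def)
    have h1: "2 * (r - 1) + (if False then 1 else 0) \<le> 2 * n" using r by simp
    have h2: "js \<le> 2 * (r - 1) + (if False then 1 else 0)" using js by simp
    show ?thesis using cdf_eq[OF conv h1 h2, of t] unfolding e A_def B_def .
  qed
  have ce: "sw_cond_cdf f g n False (pt js) (pt c) y t =
      enn2real ((\<integral>\<^sup>+u. p u * A u \<partial>lborel) * ennreal (W1 c y) * bw y) /
      enn2real ((\<integral>\<^sup>+u. p u * B u \<partial>lborel) * ennreal (W1 c y) * bw y)"
    unfolding cond_eq[OF conv cN(1) order.trans[OF less_imp_le[OF jc(2)] cN(1)]] bweq Wt_eq[OF jc(1)] fwA fwB bw_def ..
  have me: "sw_marg f g n False (pt c) y = enn2real ((\<integral>\<^sup>+u. p u * B u \<partial>lborel) * ennreal (W1 c y) * bw y)"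
    unfolding marg_eq[OF conv cN(1)] bw_def fwB ..
  have [measurable]: "fwp (Wt js t) (KK f g) c' \<in> borel_measurable lborel" "fwp W1 (KK f g) c' \<in> borel_measurable lborel"
    using cN by (auto intro!: Ct.fwp_meas C1.fwp_meas)
  have [measurable]: "Wt js t c' \<in> borel_measurable lborel" "W1 c' \<in> borel_measurable lborel"
    by (rule Wt_meas, rule W1_meas)
  have mA: "A \<in> borel_measurable lborel" unfolding A_def by measurable
  have mB: "B \<in> borel_measurable lborel" unfolding B_def by measurable
  note [measurable] = mA mB
  have [measurable]: "case_prod (KK f g c') \<in> borel_measurable (lborel \<Otimes>\<^sub>M lborel)"
    using ci by (intro KK_meas) auto
  have [measurable]: "p \<in> borel_measurable lborel" unfolding p_def by measurable
  have RP: "RP A B" unfolding A_def B_def using cN js by (intro RP_chain[OF conv order.refl]) (auto simp: c'_def)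
  have cheb: "(\<integral>\<^sup>+u. A u \<partial>lborel) * (\<integral>\<^sup>+u. p u * B u \<partial>lborel) \<le> (\<integral>\<^sup>+u. p u * A u \<partial>lborel) * (\<integral>\<^sup>+u. B u \<partial>lborel)"
  proof (rule cheb_gen[OF _ _ _ RP])
    show "\<And>u. u \<notin> {0..1} \<Longrightarrow> A u = 0 \<and> B u = 0" unfolding A_def B_def Wt_def W1_def by auto
    fix u w :: real assume uw: "0 \<le> u" "u < w" "w \<le> 1"
    have "even c'" "c' div 2 + 1 = r" using r unfolding c'_def by auto
    then show "p w \<le> p u" unfolding p_def KK_def using ci uw y
      by (auto intro!: ennreal_leI ft_anti)
  qed measurable
  have AB: "A v \<le> B v" for v
    unfolding A_def B_def by (intro mult_mono fwp_mono ennreal_leI Wt_le) auto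
  have pAB: "(\<integral>\<^sup>+u. p u * A u \<partial>lborel) \<le> (\<integral>\<^sup>+u. p u * B u \<partial>lborel)"
    by (intro nn_integral_mono mult_left_mono AB) auto
  have pos: "0 < enn2real ((\<integral>\<^sup>+u. p u * B u \<partial>lborel) * (ennreal (W1 c y) * bw y))"
    using p me unfolding c_def c'_def by (simp add: mult.assoc)
  have fin: "enn2real (\<integral>\<^sup>+u. A u \<partial>lborel) / enn2real (\<integral>\<^sup>+u. B u \<partial>lborel)
      \<le> enn2real ((\<integral>\<^sup>+u. p u * A u \<partial>lborel) * (ennreal (W1 c y) * bw y)) / enn2real ((\<integral>\<^sup>+u. p u * B u \<partial>lborel) * (ennreal (W1 c y) * bw y))"
    by (rule tail3[OF cheb _ pAB pos]) (intro nn_integral_mono AB)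
  show ?thesis using fin unfolding cdfe ce[unfolded c_def c'_def] mult.assoc by (simp only: c_def c'_def)
qed


lemma ft_bounded:
  assumes "sw_admissible \<phi>"
  shows "\<exists>B\<ge>0. \<forall>x. ft \<phi> x \<le> B"
proof -
  obtain \<phi>' where "\<And>x. x \<in> {0..1} \<Longrightarrow> (\<phi> has_real_derivative \<phi>' x) (at x within {0..1})"
    using assms unfolding sw_admissible_def by blast
  then have c: "continuous_on {0..1} \<phi>" by (rule DERIV_continuous_on)
  obtain x0 where "x0 \<in> {0..1}" "\<forall>y\<in>{0..1}. \<phi> y \<le> \<phi> x0"
    using continuous_attains_sup[OF compact_Icc _ c] by auto
  then have "\<forall>x. ft \<phi> x \<le> max 0 (\<phi> x0)" unfolding ft_def by (auto simp: le_max_iff_disj)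
  then show ?thesis by (intro exI[of _ "max 0 (\<phi> x0)"]) auto
qed

lemma KK_bound:
  assumes conv: "convex_sawtooth f g n"
  shows "\<exists>M\<ge>0. \<forall>j<2 * n. \<forall>u v. KK f g j u v \<le> M"
proof -
  have "\<exists>B. 0 \<le> B \<and> (\<forall>x. ft (f i) x \<le> B \<and> ft (g i) x \<le> B)" if i: "i \<in> {1..n}" for i
  proof -
    have a: "sw_admissible (f i)" "sw_admissible (g i)" using conv i unfolding convex_sawtooth_def by auto
    obtain B1 where B1: "B1 \<ge> 0" "\<And>x. ft (f i) x \<le> B1" using ft_bounded[OF a(1)] by auto
    obtain B2 where B2: "B2 \<ge> 0" "\<And>x. ft (g i) x \<le> B2" using ft_bounded[OF a(2)] by auto
    have "0 \<le> max B1 B2 \<and> (\<forall>x. ft (f i) x \<le> max B1 B2 \<and> ft (g i) x \<le> max B1 B2)"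
      using B1 B2 by (simp add: le_max_iff_disj)
    then show ?thesis by (rule exI)
  qed
  then have "\<forall>i\<in>{1..n}. \<exists>B. 0 \<le> B \<and> (\<forall>x. ft (f i) x \<le> B \<and> ft (g i) x \<le> B)" by blast
  then obtain Bf where Bf: "\<forall>i\<in>{1..n}. 0 \<le> Bf i \<and> (\<forall>x. ft (f i) x \<le> Bf i \<and> ft (g i) x \<le> Bf i)"
    by (rule bchoice[THEN exE]) blast
  define M where "M = (\<Sum>i\<in>{1..n}. Bf i)"
  have M: "0 \<le> M" unfolding M_def using Bf by (intro sum_nonneg) auto
  have "KK f g j u v \<le> M" if "j < 2 * n" for j u v
  proof -
    have i: "j div 2 + 1 \<in> {1..n}" using that by auto
    have b: "ft (f (j div 2 + 1)) (v - u) \<le> Bf (j div 2 + 1)" "ft (g (j div 2 + 1)) (u - v) \<le> Bf (j div 2 + 1)"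
      using Bf i by blast+
    have "KK f g j u v \<le> Bf (j div 2 + 1)" using b unfolding KK_def by simp
    also have "\<dots> \<le> M" unfolding M_def using Bf i by (intro member_le_sum) auto
    finally show ?thesis .
  qed
  then show ?thesis using M by blast
qed

lemma fwp_bound:
  assumes "0 \<le> M" "\<And>j u v. j < c \<Longrightarrow> K j u v \<le> M" "\<And>j u. W j u \<le> indicator {0..1} u"
  shows "fwp W K c v \<le> ennreal (M ^ c)"
  using assms(2)
proof (induction c arbitrary: v)
  case 0 then show ?case by simp
next
  case (Suc c)
  have bnd: "ennreal (K c u v) * (ennreal (W c u) * fwp W K c u) \<le> ennreal (M ^ Suc c) * indicator {0..1} u" for u
  proof -
    have k: "ennreal (K c u v) \<le> ennreal M" using Suc.prems by (intro ennreal_leI) auto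
    have w: "ennreal (W c u) \<le> ennreal (indicator {0..1} u)" by (intro ennreal_leI assms(3))
    have f: "fwp W K c u \<le> ennreal (M ^ c)" using Suc.prems by (intro Suc.IH) auto
    have "ennreal (K c u v) * (ennreal (W c u) * fwp W K c u) \<le> ennreal M * (ennreal (indicator {0..1} u) * ennreal (M ^ c))"
      by (intro mult_mono' k mult_mono'[OF w f]) simp_all
    also have "\<dots> = ennreal (M ^ Suc c) * indicator {0..1} u"
    proof -
      have e: "ennreal (M ^ Suc c) = ennreal M * ennreal (M ^ c)"
        by (simp only: power_Suc ennreal_mult[OF assms(1) zero_le_power[OF assms(1)]])
      show ?thesis unfolding e by (cases "u \<in> {0..1}") (simp_all add: indicator_def)
    qed
    finally show ?thesis .
  qed
  have "fwp W K (Suc c) v \<le> (\<integral>\<^sup>+u. ennreal (M ^ Suc c) * indicator {0..1::real} u \<partial>lborel)"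
    unfolding fwp.simps by (rule nn_integral_mono) (rule bnd)
  also have "\<dots> = ennreal (M ^ Suc c)" by (subst nn_integral_cmult_indicator) simp_all
  finally show ?case .
qed


lemma claim4:
  assumes conv: "convex_sawtooth f g n" and r: "1 \<le> r" "r \<le> n" and js: "js \<le> Suc (2 * (r - 1))"
    and x: "x \<in> {0..1}" and p: "0 < sw_marg f g n False (pt (2 * r)) x"
  shows "sw_cond_cdf f g n False (pt js) (pt (2 * r)) x t \<le> sw_cdf f g (r - 1) True (pt js) t"
proof -
  define c' where "c' = Suc (2 * (r - 1))"
  define c where "c = Suc c'"
  have cc: "c = 2 * r" unfolding c_def c'_def using r by simp
  have cN: "c \<le> 2 * n" "c' \<le> 2 * n" "c' < 2 * n" using r unfolding c_def c'_def by auto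
  interpret Ct: chainm "Wt js t" "KK f g" "2 * n" by (rule chainm_Wt[OF conv]) simp
  interpret C1: chainm W1 "KK f g" "2 * n" by (rule chainm_W1[OF conv]) simp
  have ci: "sw_admissible (f (c' div 2 + 1)) \<and> sw_admissible (g (c' div 2 + 1))"
    using conv_idx[OF conv cN(3)] by auto
  define A where "A v = fwp (Wt js t) (KK f g) c' v * ennreal (Wt js t c' v)" for v
  define B where "B v = fwp W1 (KK f g) c' v * ennreal (W1 c' v)" for v
  define bw where "bw v = bwd W1 (KK f g) (2 * n) (2 * n - c) v" for v
  define p where "p u = ennreal (KK f g c' u x)" for u
  have jc: "c \<noteq> js" "js < c" using js unfolding c_def c'_def by auto
  have bweq: "bwd (Wt js t) (KK f g) (2 * n) (2 * n - c) v = bw v" for v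
    unfolding bw_def using jc cN by (intro bwd_cong) (auto simp: Wt_eq)
  have fwA: "fwp (Wt js t) (KK f g) c x = (\<integral>\<^sup>+u. p u * A u \<partial>lborel)"
    unfolding c_def p_def A_def by (simp add: mult_ac)
  have fwB: "fwp W1 (KK f g) c x = (\<integral>\<^sup>+u. p u * B u \<partial>lborel)"
    unfolding c_def p_def B_def by (simp add: mult_ac)
  have cdfe: "sw_cdf f g (r - 1) True (pt js) t = enn2real (\<integral>\<^sup>+u. A u \<partial>lborel) / enn2real (\<integral>\<^sup>+u. B u \<partial>lborel)"
  proof -
    have e: "2 * (r - 1) + (if True then 1 else 0) = c'" by (simp add: c'_def)
    have h1: "2 * (r - 1) + (if True then 1 else 0) \<le> 2 * n" using r by simp
    have h2: "js \<le> 2 * (r - 1) + (if True then 1 else 0)" using js by simp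
    show ?thesis using cdf_eq[OF conv h1 h2, of t] unfolding e A_def B_def .
  qed
  have ce: "sw_cond_cdf f g n False (pt js) (pt c) x t =
      enn2real ((\<integral>\<^sup>+u. p u * A u \<partial>lborel) * ennreal (W1 c x) * bw x) /
      enn2real ((\<integral>\<^sup>+u. p u * B u \<partial>lborel) * ennreal (W1 c x) * bw x)"
    unfolding cond_eq[OF conv cN(1) order.trans[OF less_imp_le[OF jc(2)] cN(1)]] bweq Wt_eq[OF jc(1)] fwA fwB bw_def ..
  have me: "sw_marg f g n False (pt c) x = enn2real ((\<integral>\<^sup>+u. p u * B u \<partial>lborel) * ennreal (W1 c x) * bw x)"
    unfolding marg_eq[OF conv cN(1)] bw_def fwB ..
  have [measurable]: "fwp (Wt js t) (KK f g) c' \<in> borel_measurable lborel" "fwp W1 (KK f g) c' \<in> borel_measurable lborel"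
    using cN by (auto intro!: Ct.fwp_meas C1.fwp_meas)
  have [measurable]: "Wt js t c' \<in> borel_measurable lborel" "W1 c' \<in> borel_measurable lborel"
    by (rule Wt_meas, rule W1_meas)
  have mA: "A \<in> borel_measurable lborel" unfolding A_def by measurable
  have mB: "B \<in> borel_measurable lborel" unfolding B_def by measurable
  note [measurable] = mA mB
  have [measurable]: "case_prod (KK f g c') \<in> borel_measurable (lborel \<Otimes>\<^sub>M lborel)"
    using ci by (intro KK_meas) auto
  have [measurable]: "p \<in> borel_measurable lborel" unfolding p_def by measurable
  have RP: "RP A B" unfolding A_def B_def using cN js by (intro RP_chain[OF conv order.refl]) (auto simp: c'_def)
  have cheb: "(\<integral>\<^sup>+u. p u * A u \<partial>lborel) * (\<integral>\<^sup>+u. B u \<partial>lborel) \<le> (\<integral>\<^sup>+u. A u \<partial>lborel) * (\<integral>\<^sup>+u. p u * B u \<partial>lborel)"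
  proof (rule cheb_inc[OF _ _ _ RP])
    show "\<And>u. u \<notin> {0..1} \<Longrightarrow> A u = 0 \<and> B u = 0" unfolding A_def B_def Wt_def W1_def by auto
    fix u w :: real assume uw: "0 \<le> u" "u < w" "w \<le> 1"
    have "\<not> even c'" "c' div 2 + 1 = r" using r unfolding c'_def by auto
    then show "p u \<le> p w" unfolding p_def KK_def using ci uw x
      by (auto intro!: ennreal_leI ft_mono)
  qed measurable
  have AB: "A v \<le> B v" for v
    unfolding A_def B_def by (intro mult_mono fwp_mono ennreal_leI Wt_le) auto
  have pAB: "(\<integral>\<^sup>+u. p u * A u \<partial>lborel) \<le> (\<integral>\<^sup>+u. p u * B u \<partial>lborel)"
    by (intro nn_integral_mono mult_left_mono AB) auto
  obtain M where M: "0 \<le> M" "\<forall>j<2 * n. \<forall>u v. KK f g j u v \<le> M" using KK_bound[OF conv] by blast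
  have Bfin: "(\<integral>\<^sup>+u. B u \<partial>lborel) < top"
  proof -
    have "B u \<le> ennreal (M ^ c') * indicator {0..1::real} u" for u
    proof -
      have "fwp W1 (KK f g) c' u \<le> ennreal (M ^ c')"
        using M cN by (intro fwp_bound) (auto simp: W1_def)
      then show ?thesis unfolding B_def W1_def by (cases "u \<in> {0..1}") auto
    qed
    then have "(\<integral>\<^sup>+u. B u \<partial>lborel) \<le> (\<integral>\<^sup>+u. ennreal (M ^ c') * indicator {0..1::real} u \<partial>lborel)"
      by (intro nn_integral_mono) auto
    also have "\<dots> = ennreal (M ^ c')" by (subst nn_integral_cmult_indicator) simp_all
    finally show ?thesis using ennreal_less_top order.strict_trans1 by blast
  qed
  have Bnz: "(\<integral>\<^sup>+u. B u \<partial>lborel) \<noteq> 0"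
  proof
    assume "(\<integral>\<^sup>+u. B u \<partial>lborel) = 0"
    then have "AE u in lborel. B u = 0" by (subst (asm) nn_integral_0_iff_AE) auto
    then have "AE u in lborel. p u * B u = 0" by eventually_elim simp
    then have "(\<integral>\<^sup>+u. p u * B u \<partial>lborel) = 0" by (subst nn_integral_0_iff_AE) auto
    then have "sw_marg f g n False (pt c) x = 0" unfolding me by simp
    then show False using p cc by simp
  qed
  have pos: "0 < enn2real (\<integral>\<^sup>+u. B u \<partial>lborel)"
    using Bfin Bnz by (simp add: enn2real_positive_iff top.not_eq_extremum zero_less_iff_neq_zero)
  have fin: "enn2real ((\<integral>\<^sup>+u. p u * A u \<partial>lborel) * (ennreal (W1 c x) * bw x)) / enn2real ((\<integral>\<^sup>+u. p u * B u \<partial>lborel) * (ennreal (W1 c x) * bw x))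
      \<le> enn2real (\<integral>\<^sup>+u. A u \<partial>lborel) / enn2real (\<integral>\<^sup>+u. B u \<partial>lborel)"
    by (rule tail4[OF cheb _ pAB pos]) (intro nn_integral_mono AB)
  show ?thesis using fin unfolding cdfe ce[unfolded cc] mult.assoc by (simp only: cc)
qed

theorem mainTheorem6:
  fixes f g :: "nat \<Rightarrow> real \<Rightarrow> real" and n s r :: nat and t :: real
  assumes S: "convex_sawtooth f g n"
    and sr: "1 \<le> s" "s \<le> r"
    and t: "t \<in> {0..1}"
  shows
    "(r \<le> n + 1 \<longrightarrow>
       (\<forall>x1\<in>{0..1}. \<forall>x2\<in>{0..1}. x1 \<le> x2 \<longrightarrow>
          sw_marg f g n False (XP r) x1 > 0 \<longrightarrow> sw_marg f g n False (XP r) x2 > 0 \<longrightarrow>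
          sw_cond_cdf f g n False (XP s) (XP r) x2 t \<le> sw_cond_cdf f g n False (XP s) (XP r) x1 t))
   \<and> (r \<le> n \<longrightarrow>
       (\<forall>y1\<in>{0..1}. \<forall>y2\<in>{0..1}. y1 \<le> y2 \<longrightarrow>
          sw_marg f g n False (YP r) y1 > 0 \<longrightarrow> sw_marg f g n False (YP r) y2 > 0 \<longrightarrow>
          sw_cond_cdf f g n False (XP s) (YP r) y2 t \<le> sw_cond_cdf f g n False (XP s) (YP r) y1 t))
   \<and> (r \<le> n \<longrightarrow>
       (\<forall>y\<in>{0..1}. sw_marg f g n False (YP r) y > 0 \<longrightarrow>
          sw_cdf f g (r - 1) False (XP s) t \<le> sw_cond_cdf f g n False (XP s) (YP r) y t))
   \<and> (r \<le> n \<longrightarrow>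
       (\<forall>x\<in>{0..1}. sw_marg f g n False (XP (r + 1)) x > 0 \<longrightarrow>
          sw_cdf f g (r - 1) True (XP s) t \<ge> sw_cond_cdf f g n False (XP s) (XP (r + 1)) x t))"
proof -
  define js where "js = 2 * (s - 1)"
  have XPs: "XP s = pt js" unfolding js_def using sr pt_even[of "s - 1"] by simp
  have XPr: "XP r = pt (2 * (r - 1))" using sr pt_even[of "r - 1"] by simp
  have YPr: "YP r = pt (Suc (2 * (r - 1)))" using sr pt_odd[of "r - 1"] by simp
  have XPr1: "XP (r + 1) = pt (2 * r)" using pt_even[of r] by simp
  have jsr: "js \<le> 2 * (r - 1)" unfolding js_def using sr by simp
  have P1: "sw_cond_cdf f g n False (XP s) (XP r) x2 t \<le> sw_cond_cdf f g n False (XP s) (XP r) x1 t"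
    if "r \<le> n + 1" "x1 \<le> x2" "0 < sw_marg f g n False (XP r) x1" "0 < sw_marg f g n False (XP r) x2" for x1 x2 :: real
    using that unfolding XPs XPr by (intro claim12[OF S jsr]) auto
  have j: "js \<le> Suc (2 * (r - 1))" using jsr by simp
  have P2: "sw_cond_cdf f g n False (XP s) (YP r) y2 t \<le> sw_cond_cdf f g n False (XP s) (YP r) y1 t"
    if "r \<le> n" "y1 \<le> y2" "0 < sw_marg f g n False (YP r) y1" "0 < sw_marg f g n False (YP r) y2" for y1 y2 :: real
    using that sr unfolding XPs YPr by (intro claim12[OF S j]) auto
  have P3: "sw_cdf f g (r - 1) False (XP s) t \<le> sw_cond_cdf f g n False (XP s) (YP r) y t"
    if "r \<le> n" "y \<in> {0..1}" "0 < sw_marg f g n False (YP r) y" for y :: real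
    using that sr unfolding XPs YPr by (intro claim3[OF S _ _ jsr]) auto
  have P4: "sw_cond_cdf f g n False (XP s) (XP (r + 1)) x t \<le> sw_cdf f g (r - 1) True (XP s) t"
    if "r \<le> n" "x \<in> {0..1}" "0 < sw_marg f g n False (XP (r + 1)) x" for x :: real
    using that sr unfolding XPs XPr1 by (intro claim4[OF S _ _ j]) auto
  show ?thesis using P1 P2 P3 P4 by blast
qed

end
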